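(* Let $(X_0,\langle\cdot,\cdot\rangle_0)$ be a Hilbert space with orthonormal basis $\{e_i\}_{i=1}^\infty$. Let numbers $a_{i,s}$ ($i,s\in\mathbb N$) satisfy $1\le a_{i,s}\le a_{i,s+1}$ for all $i,s$, and for $s\in\mathbb N$ define $$X_s:=\{f\in X_0: \{a_{i,s}\langle f,e_i\rangle_0\}_{i=1}^\infty\in\ell^2\},\qquad \langle f,h\rangle_s:=\sum_{i=1}^\infty a_{i,s}^2\langle f,e_i\rangle_0\langle e_i,h\rangle_0 .$$ Let $k_1<k_2<\cdots$ be positive integers and $t_i\in\mathbb R\setminus\{0\}$, and define $g_i\in X_0^*$ by $g_i(f):=t_i\langle f,e_1\rangle_0$ for $i=1,\dots,k_1$ and $g_i(f):=t_i\langle f,e_j\rangle_0$ for $i=k_{j-1}+1,\dots,k_j$, $j\ge2$. For $s\in\mathbb N_0$ and a scalar sequence $c=\{c_i\}$ let $M^c_s:=\{f\in X_s:|c_i|\le|g_i(f)|\ \forall i\}$, $\Theta_s:=\{c:M^c_s\ne\varnothing\}$ with $\|c\|_s:=\inf\{\|f\|_s: f\in M^c_s\}$, and let $X_F:=\bigcap_s X_s$, $\Theta_F:=\bigcap_s\Theta_s$. Then $\{X_s\}_{s\in\mathbb N_0}$ is a sequence of Hilbert spaces with $\{0\}\ne X_F\subseteq\cdots\subseteq X_1\subseteq X_0$, $\|\cdot\|_0\le\|\cdot\|_1\le\cdots$ and $X_F$ dense in every $X_s$; $\{\Theta_s\}_{s\in\mathbb N_0}$ is a sequence of $CB$-spaces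 with $\{0\}\ne\Theta_F\subseteq\cdots\subseteq\Theta_1\subseteq\Theta_0$, $\|\cdot\|_0\le\|\cdot\|_1\le\cdots$ and $\Theta_F$ dense in every $\Theta_s$; and $\{g_i|_{X_F}\}$ is a tight $F$-frame for $X_F$ with respect to $\Theta_F$.
   Context: A $CB$-space is a Banach sequence space with continuous coordinate functionals in which the canonical unit vectors form a Schauder basis. For nested Banach spaces $X_s$ and nested such sequence spaces $\Theta_s$ (intersections nonzero and dense, norms increasing in $s$) with $X_F=\bigcap X_s$, $\Theta_F=\bigcap\Theta_s$: $\{g_i\}\subset X_F^*$ is a pre-$F$-frame for $X_F$ with respect to $\Theta_F$ if $\{g_i(f)\}\in\Theta_F$ for all $f\in X_F$ and for each $s$ there are $0<A_s\le B_s$ with $A_s\|f\|_s\le\|\{g_i(f)\}\|_s\le B_s\|f\|_s$ for all $f\in X_F$; it is tight if $A_s=B_s$ for all $s$; it is an $F$-frame if in addition there is a linear operator $V:\Theta_F\to X_F$ which is $F$-bounded (for each $s$ there is $K_s$ with $\|Vc\|_s\le K_s\|c\|_s$ for all $c\in\Theta_F$) such that $V(\{g_i(f)\})=f$ for all $f\in X_F$. *)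

theory Defs
  imports "HOL-Analysis.Analysis"
begin

definition hilbert_on :: "'v::real_vector set \<Rightarrow> ('v \<Rightarrow> 'v \<Rightarrow> real) \<Rightarrow> bool" where
  "hilbert_on S ip \<longleftrightarrow>
     subspace S \<and>
     (\<forall>x\<in>S. \<forall>y\<in>S. ip x y = ip y x) \<and>
     (\<forall>x\<in>S. \<forall>y\<in>S. \<forall>z\<in>S. ip (x + y) z = ip x z + ip y z) \<and>
     (\<forall>x\<in>S. \<forall>y\<in>S. \<forall>r. ip (r *\<^sub>R x) y = r * ip x y) \<and>
     (\<forall>x\<in>S. 0 \<le> ip x x) \<and>
     (\<forall>x\<in>S. ip x x = 0 \<longrightarrow> x = 0) \<and>
     (\<forall>X. (\<forall>n. X n \<in> S) \<and>
          (\<forall>\<epsilon>>0. \<exists>N. \<forall>m\<ge>N. \<forall>n\<ge>N. sqrt (ip (X m - X n) (X m - X n)) < \<epsilon>) \<longrightarrow>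
          (\<exists>L\<in>S. (\<lambda>n. sqrt (ip (X n - L) (X n - L))) \<longlonglongrightarrow> 0))"

definition seq_add :: "(nat \<Rightarrow> real) \<Rightarrow> (nat \<Rightarrow> real) \<Rightarrow> (nat \<Rightarrow> real)" where
  "seq_add c d = (\<lambda>i. c i + d i)"
definition seq_diff :: "(nat \<Rightarrow> real) \<Rightarrow> (nat \<Rightarrow> real) \<Rightarrow> (nat \<Rightarrow> real)" where
  "seq_diff c d = (\<lambda>i. c i - d i)"
definition seq_scale :: "real \<Rightarrow> (nat \<Rightarrow> real) \<Rightarrow> (nat \<Rightarrow> real)" where
  "seq_scale r c = (\<lambda>i. r * c i)"
definition seq_zero :: "nat \<Rightarrow> real" where
  "seq_zero = (\<lambda>i. 0)"
definition unit_seq :: "nat \<Rightarrow> nat \<Rightarrow> real" where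
  "unit_seq j = (\<lambda>i. if i = j then 1 else 0)"
text \<open>Partial sums \<open>\<Sum>_{j<n} \<alpha>_j \<delta>_j\<close>.\<close>
definition seq_partial :: "(nat \<Rightarrow> real) \<Rightarrow> nat \<Rightarrow> nat \<Rightarrow> real" where
  "seq_partial \<alpha> n = (\<lambda>i. if i < n then \<alpha> i else 0)"

definition banach_seq_space :: "(nat \<Rightarrow> real) set \<Rightarrow> ((nat \<Rightarrow> real) \<Rightarrow> real) \<Rightarrow> bool" where
  "banach_seq_space \<Theta> nm \<longleftrightarrow>
     seq_zero \<in> \<Theta> \<and>
     (\<forall>c\<in>\<Theta>. \<forall>d\<in>\<Theta>. seq_add c d \<in> \<Theta>) \<and>
     (\<forall>c\<in>\<Theta>. \<forall>r. seq_scale r c \<in> \<Theta>) \<and>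
     (\<forall>c\<in>\<Theta>. 0 \<le> nm c) \<and>
     (\<forall>c\<in>\<Theta>. nm c = 0 \<longleftrightarrow> c = seq_zero) \<and>
     (\<forall>c\<in>\<Theta>. \<forall>r. nm (seq_scale r c) = \<bar>r\<bar> * nm c) \<and>
     (\<forall>c\<in>\<Theta>. \<forall>d\<in>\<Theta>. nm (seq_add c d) \<le> nm c + nm d) \<and>
     (\<forall>X. (\<forall>n. X n \<in> \<Theta>) \<and>
          (\<forall>\<epsilon>>0. \<exists>N. \<forall>m\<ge>N. \<forall>n\<ge>N. nm (seq_diff (X m) (X n)) < \<epsilon>) \<longrightarrow>
          (\<exists>L\<in>\<Theta>. (\<lambda>n. nm (seq_diff (X n) L)) \<longlonglongrightarrow> 0))"

text \<open>CB-space: Banach sequence space with continuous coordinate functionals in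
  which the canonical unit vectors form a Schauder basis.\<close>
definition cb_space :: "(nat \<Rightarrow> real) set \<Rightarrow> ((nat \<Rightarrow> real) \<Rightarrow> real) \<Rightarrow> bool" where
  "cb_space \<Theta> nm \<longleftrightarrow>
     banach_seq_space \<Theta> nm \<and>
     (\<forall>i. \<exists>C. \<forall>c\<in>\<Theta>. \<bar>c i\<bar> \<le> C * nm c) \<and>
     (\<forall>j. unit_seq j \<in> \<Theta>) \<and>
     (\<forall>c\<in>\<Theta>. \<exists>!\<alpha>. (\<lambda>n. nm (seq_diff c (seq_partial \<alpha> n))) \<longlonglongrightarrow> 0)"

text \<open>Continuous linear functionals on the Fr\'echet space \<open>X_F\<close> whose topology
  is given by the increasing norms \<open>nX s\<close>.\<close>
definition F_dual :: "'v::real_vector set \<Rightarrow> (nat \<Rightarrow> 'v \<Rightarrow> real) \<Rightarrow> ('v \<Rightarrow> real) \<Rightarrow> bool" where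
  "F_dual XF nX \<phi> \<longleftrightarrow>
     (\<forall>f\<in>XF. \<forall>h\<in>XF. \<phi> (f + h) = \<phi> f + \<phi> h) \<and>
     (\<forall>f\<in>XF. \<forall>r. \<phi> (r *\<^sub>R f) = r * \<phi> f) \<and>
     (\<exists>s C. \<forall>f\<in>XF. \<bar>\<phi> f\<bar> \<le> C * nX s f)"

definition pre_F_frame ::
  "'v::real_vector set \<Rightarrow> (nat \<Rightarrow> 'v \<Rightarrow> real) \<Rightarrow> (nat \<Rightarrow> real) set
   \<Rightarrow> (nat \<Rightarrow> (nat \<Rightarrow> real) \<Rightarrow> real) \<Rightarrow> (nat \<Rightarrow> 'v \<Rightarrow> real) \<Rightarrow> bool" where
  "pre_F_frame XF nX \<Theta>F n\<Theta> g \<longleftrightarrow>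
     (\<forall>i. F_dual XF nX (g i)) \<and>
     (\<forall>f\<in>XF. (\<lambda>i. g i f) \<in> \<Theta>F) \<and>
     (\<forall>s. \<exists>A B. 0 < A \<and> A \<le> B \<and>
        (\<forall>f\<in>XF. A * nX s f \<le> n\<Theta> s (\<lambda>i. g i f) \<and> n\<Theta> s (\<lambda>i. g i f) \<le> B * nX s f))"

definition tight_pre_F_frame ::
  "'v::real_vector set \<Rightarrow> (nat \<Rightarrow> 'v \<Rightarrow> real) \<Rightarrow> (nat \<Rightarrow> real) set
   \<Rightarrow> (nat \<Rightarrow> (nat \<Rightarrow> real) \<Rightarrow> real) \<Rightarrow> (nat \<Rightarrow> 'v \<Rightarrow> real) \<Rightarrow> bool" where
  "tight_pre_F_frame XF nX \<Theta>F n\<Theta> g \<longleftrightarrow>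
     pre_F_frame XF nX \<Theta>F n\<Theta> g \<and>
     (\<forall>s. \<exists>A B. 0 < A \<and> A \<le> B \<and> A = B \<and>
        (\<forall>f\<in>XF. A * nX s f \<le> n\<Theta> s (\<lambda>i. g i f) \<and> n\<Theta> s (\<lambda>i. g i f) \<le> B * nX s f))"

definition F_frame ::
  "'v::real_vector set \<Rightarrow> (nat \<Rightarrow> 'v \<Rightarrow> real) \<Rightarrow> (nat \<Rightarrow> real) set
   \<Rightarrow> (nat \<Rightarrow> (nat \<Rightarrow> real) \<Rightarrow> real) \<Rightarrow> (nat \<Rightarrow> 'v \<Rightarrow> real) \<Rightarrow> bool" where
  "F_frame XF nX \<Theta>F n\<Theta> g \<longleftrightarrow>
     pre_F_frame XF nX \<Theta>F n\<Theta> g \<and>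
     (\<exists>V :: (nat \<Rightarrow> real) \<Rightarrow> 'v.
        (\<forall>c\<in>\<Theta>F. V c \<in> XF) \<and>
        (\<forall>c\<in>\<Theta>F. \<forall>d\<in>\<Theta>F. V (seq_add c d) = V c + V d) \<and>
        (\<forall>c\<in>\<Theta>F. \<forall>r. V (seq_scale r c) = r *\<^sub>R V c) \<and>
        (\<forall>s. \<exists>K. \<forall>c\<in>\<Theta>F. nX s (V c) \<le> K * n\<Theta> s c) \<and>
        (\<forall>f\<in>XF. V (\<lambda>i. g i f) = f))"

definition tight_F_frame ::
  "'v::real_vector set \<Rightarrow> (nat \<Rightarrow> 'v \<Rightarrow> real) \<Rightarrow> (nat \<Rightarrow> real) set
   \<Rightarrow> (nat \<Rightarrow> (nat \<Rightarrow> real) \<Rightarrow> real) \<Rightarrow> (nat \<Rightarrow> 'v \<Rightarrow> real) \<Rightarrow> bool" where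
  "tight_F_frame XF nX \<Theta>F n\<Theta> g \<longleftrightarrow>
     tight_pre_F_frame XF nX \<Theta>F n\<Theta> g \<and> F_frame XF nX \<Theta>F n\<Theta> g"

section \<open>The concrete construction (indices i shifted to start at 0)\<close>

text \<open>\<open>a i s\<close> for \<open>s \<ge> 1\<close> are the weights \<open>a_{i+1,s}\<close>; level 0 is the original space.\<close>
definition innerS :: "(nat \<Rightarrow> nat \<Rightarrow> real) \<Rightarrow> (nat \<Rightarrow> 'a::real_inner) \<Rightarrow> nat \<Rightarrow> 'a \<Rightarrow> 'a \<Rightarrow> real" where
  "innerS a e s f h =
     (if s = 0 then inner f h
      else (\<Sum>i. (a i s)\<^sup>2 * inner f (e i) * inner (e i) h))"

definition normS :: "(nat \<Rightarrow> nat \<Rightarrow> real) \<Rightarrow> (nat \<Rightarrow> 'a::real_inner) \<Rightarrow> nat \<Rightarrow> 'a \<Rightarrow> real" where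
  "normS a e s f = sqrt (innerS a e s f f)"

definition XS :: "(nat \<Rightarrow> nat \<Rightarrow> real) \<Rightarrow> (nat \<Rightarrow> 'a::real_inner) \<Rightarrow> nat \<Rightarrow> 'a set" where
  "XS a e s =
     (if s = 0 then UNIV else {f. summable (\<lambda>i. (a i s * inner f (e i))\<^sup>2)})"

definition XF :: "(nat \<Rightarrow> nat \<Rightarrow> real) \<Rightarrow> (nat \<Rightarrow> 'a::real_inner) \<Rightarrow> 'a set" where
  "XF a e = (\<Inter>s. XS a e s)"

text \<open>Block index: functional \<open>i\<close> (0-based) uses basis vector \<open>e (blk k i)\<close>,
  where \<open>k j\<close> is the paper's \<open>k_{j+1}\<close>.\<close>
definition blk :: "(nat \<Rightarrow> nat) \<Rightarrow> nat \<Rightarrow> nat" where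
  "blk k i = (LEAST j. i < k j)"

definition gfun :: "(nat \<Rightarrow> real) \<Rightarrow> (nat \<Rightarrow> 'a::real_inner) \<Rightarrow> (nat \<Rightarrow> nat) \<Rightarrow> nat \<Rightarrow> 'a \<Rightarrow> real" where
  "gfun t e k i f = t i * inner f (e (blk k i))"

definition Mset :: "(nat \<Rightarrow> nat \<Rightarrow> real) \<Rightarrow> (nat \<Rightarrow> 'a::real_inner) \<Rightarrow> (nat \<Rightarrow> real) \<Rightarrow> (nat \<Rightarrow> nat)
    \<Rightarrow> nat \<Rightarrow> (nat \<Rightarrow> real) \<Rightarrow> 'a set" where
  "Mset a e t k s c = {f \<in> XS a e s. \<forall>i. \<bar>c i\<bar> \<le> \<bar>gfun t e k i f\<bar>}"

definition ThetaS :: "(nat \<Rightarrow> nat \<Rightarrow> real) \<Rightarrow> (nat \<Rightarrow> 'a::real_inner) \<Rightarrow> (nat \<Rightarrow> real) \<Rightarrow> (nat \<Rightarrow> nat)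
    \<Rightarrow> nat \<Rightarrow> (nat \<Rightarrow> real) set" where
  "ThetaS a e t k s = {c. Mset a e t k s c \<noteq> {}}"

definition normTh :: "(nat \<Rightarrow> nat \<Rightarrow> real) \<Rightarrow> (nat \<Rightarrow> 'a::real_inner) \<Rightarrow> (nat \<Rightarrow> real) \<Rightarrow> (nat \<Rightarrow> nat)
    \<Rightarrow> nat \<Rightarrow> (nat \<Rightarrow> real) \<Rightarrow> real" where
  "normTh a e t k s c = Inf (normS a e s ` Mset a e t k s c)"

definition ThetaF :: "(nat \<Rightarrow> nat \<Rightarrow> real) \<Rightarrow> (nat \<Rightarrow> 'a::real_inner) \<Rightarrow> (nat \<Rightarrow> real) \<Rightarrow> (nat \<Rightarrow> nat)
    \<Rightarrow> (nat \<Rightarrow> real) set" where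
  "ThetaF a e t k = (\<Inter>s. ThetaS a e t k s)"

end

theory Submission
  imports Defs
begin


lemma sq_prod_summable:
  fixes x y :: "nat \<Rightarrow> real"
  assumes "summable (\<lambda>i. (x i)\<^sup>2)" "summable (\<lambda>i. (y i)\<^sup>2)"
  shows "summable (\<lambda>i. x i * y i)"
proof (rule summable_comparison_test[OF _ summable_add[OF assms]])
  have "norm (x n * y n) \<le> (x n)\<^sup>2 + (y n)\<^sup>2" for n
  proof -
    have "0 \<le> (\<bar>x n\<bar> - \<bar>y n\<bar>)\<^sup>2" by simp
    then have "2 * (\<bar>x n\<bar> * \<bar>y n\<bar>) \<le> (x n)\<^sup>2 + (y n)\<^sup>2"
      by (simp add: power2_diff)
    moreover have "0 \<le> \<bar>x n\<bar> * \<bar>y n\<bar>" by simp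
    ultimately show ?thesis unfolding real_norm_def abs_mult by linarith
  qed
  then show "\<exists>N. \<forall>n\<ge>N. norm (x n * y n) \<le> (x n)\<^sup>2 + (y n)\<^sup>2" by blast
qed

lemma sq_add_summable:
  fixes x y :: "nat \<Rightarrow> real"
  assumes "summable (\<lambda>i. (x i)\<^sup>2)" "summable (\<lambda>i. (y i)\<^sup>2)"
  shows "summable (\<lambda>i. (x i + y i)\<^sup>2)"
proof -
  have "summable (\<lambda>i. (x i)\<^sup>2 + (y i)\<^sup>2 + 2 * (x i * y i))"
    by (intro summable_add summable_mult sq_prod_summable assms)
  then show ?thesis by (simp add: power2_sum algebra_simps)
qed

locale hb =
  fixes e :: "nat \<Rightarrow> 'a::{real_inner,complete_space}"
  assumes orthonormal: "\<And>i j. inner (e i) (e j) = (if i = j then 1 else 0)"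
    and complete_basis: "closure (span (range e)) = UNIV"
begin

definition cf :: "'a \<Rightarrow> nat \<Rightarrow> real" where "cf f i = inner f (e i)"

definition G :: "(nat \<Rightarrow> real) \<Rightarrow> nat set \<Rightarrow> 'a" where
  "G x A = (\<Sum>i\<in>A. x i *\<^sub>R e i)"

lemma cf_G: "finite A \<Longrightarrow> cf (G x A) j = (if j \<in> A then x j else 0)"
  unfolding cf_def G_def
  by (simp add: inner_sum_left orthonormal if_distrib cong: if_cong)

lemma cf_add: "cf (f + h) i = cf f i + cf h i" by (simp add: cf_def inner_add_left)
lemma cf_diff: "cf (f - h) i = cf f i - cf h i" by (simp add: cf_def inner_diff_left)
lemma cf_scale: "cf (r *\<^sub>R f) i = r * cf f i" by (simp add: cf_def)
lemma cf_zero: "cf 0 i = 0" by (simp add: cf_def)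
lemma cf_bound: "\<bar>cf f i\<bar> \<le> norm f"
proof -
  have "norm (e i) = 1" using orthonormal[of i i] by (simp add: norm_eq_sqrt_inner)
  then show ?thesis unfolding cf_def using Cauchy_Schwarz_ineq2[of f "e i"] by simp
qed

lemma inner_G: "finite A \<Longrightarrow> inner (G x A) h = (\<Sum>i\<in>A. x i * cf h i)"
  unfolding G_def cf_def by (simp add: inner_sum_left) (metis inner_commute)

lemma norm_G: "finite A \<Longrightarrow> inner (G x A) (G x A) = (\<Sum>i\<in>A. (x i)\<^sup>2)"
  by (simp add: inner_G cf_G power2_eq_square)

lemma bessel_fin: "(\<Sum>i<n. (cf f i)\<^sup>2) \<le> inner f f"
proof -
  let ?P = "G (cf f) {..<n}"
  have "0 \<le> inner (f - ?P) (f - ?P)" by simp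
  also have "\<dots> = inner f f - 2 * inner ?P f + inner ?P ?P"
    by (simp add: inner_diff_left inner_diff_right inner_commute)
  also have "inner ?P f = (\<Sum>i<n. (cf f i)\<^sup>2)" by (simp add: inner_G power2_eq_square)
  also have "inner ?P ?P = (\<Sum>i<n. (cf f i)\<^sup>2)" by (simp add: norm_G)
  finally show ?thesis by simp
qed

lemma cf_summable: "summable (\<lambda>i. (cf f i)\<^sup>2)"
  by (rule bounded_imp_summable[where B="inner f f"])
     (simp, metis bessel_fin lessThan_Suc_atMost)

lemma ortho_zero:
  assumes "\<And>i. cf d i = 0" shows "d = 0"
proof -
  have "span (range e) \<subseteq> {y. inner d y = 0}"
    by (rule span_minimal) (use assms in \<open>auto simp: cf_def subspace_def inner_add_right\<close>)
  moreover have "closed {y. inner d y = 0}"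
    by (intro closed_Collect_eq continuous_intros)
  ultimately have "closure (span (range e)) \<subseteq> {y. inner d y = 0}"
    by (rule closure_minimal)
  then have "d \<in> {y. inner d y = 0}" using complete_basis by blast
  then show ?thesis by simp
qed

lemma cf_inj: "(\<And>i. cf f i = cf h i) \<Longrightarrow> f = h"
  using ortho_zero[of "f - h"] by (simp add: cf_diff)

lemma G_diff: "n \<le> m \<Longrightarrow> G x {..<m} - G x {..<n} = G x {n..<m}"
proof -
  assume "n \<le> m"
  then have "{..<m} = {..<n} \<union> {n..<m}" by auto
  moreover have "G x ({..<n} \<union> {n..<m}) = G x {..<n} + G x {n..<m}"
    unfolding G_def by (rule sum.union_disjoint) auto
  ultimately have "G x {..<m} = G x {..<n} + G x {n..<m}" by simp
  then show ?thesis by simp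
qed

lemma G_cauchy:
  assumes "summable (\<lambda>i. (x i)\<^sup>2)" shows "Cauchy (\<lambda>n. G x {..<n})"
proof (rule metric_CauchyI)
  fix \<epsilon> :: real assume "0 < \<epsilon>"
  let ?S = "\<lambda>n. \<Sum>i<n. (x i)\<^sup>2"
  have "convergent ?S" using assms summable_iff_convergent by blast
  then have "Cauchy ?S" using convergent_Cauchy by blast
  then obtain M where M: "\<And>m n. m \<ge> M \<Longrightarrow> n \<ge> M \<Longrightarrow> dist (?S m) (?S n) < \<epsilon>\<^sup>2"
    using \<open>0 < \<epsilon>\<close> metric_CauchyD[of ?S "\<epsilon>\<^sup>2"] by auto
  have key: "dist (G x {..<m}) (G x {..<n}) < \<epsilon>" if "M \<le> n" "n \<le> m" for m n
  proof -
    have "(dist (G x {..<m}) (G x {..<n}))\<^sup>2 = inner (G x {n..<m}) (G x {n..<m})"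
      using that by (simp add: dist_norm G_diff power2_norm_eq_inner)
    also have "\<dots> = (\<Sum>i\<in>{n..<m}. (x i)\<^sup>2)" by (simp add: norm_G)
    also have "\<dots> = ?S m - ?S n"
    proof -
      have "{..<m} = {..<n} \<union> {n..<m}" using that by auto
      moreover have "(\<Sum>i\<in>{..<n} \<union> {n..<m}. (x i)\<^sup>2) = ?S n + (\<Sum>i\<in>{n..<m}. (x i)\<^sup>2)"
        by (rule sum.union_disjoint) auto
      ultimately have "?S m = ?S n + (\<Sum>i\<in>{n..<m}. (x i)\<^sup>2)" by simp
      then show ?thesis by simp
    qed
    also have "\<dots> < \<epsilon>\<^sup>2" using M[of m n] that by (simp add: dist_real_def)
    finally show ?thesis using \<open>0 < \<epsilon>\<close> by (simp add: power_less_imp_less_base)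
  qed
  show "\<exists>M. \<forall>m\<ge>M. \<forall>n\<ge>M. dist (G x {..<m}) (G x {..<n}) < \<epsilon>"
  proof (intro exI allI impI)
    fix m n assume "M \<le> m" "M \<le> n"
    then show "dist (G x {..<m}) (G x {..<n}) < \<epsilon>"
      using key[of n m] key[of m n] by (cases "n \<le> m") (auto simp: dist_commute)
  qed
qed

definition RF :: "(nat \<Rightarrow> real) \<Rightarrow> 'a" where "RF x = lim (\<lambda>n. G x {..<n})"

lemma RF_lim: "summable (\<lambda>i. (x i)\<^sup>2) \<Longrightarrow> (\<lambda>n. G x {..<n}) \<longlonglongrightarrow> RF x"
  unfolding RF_def using G_cauchy Cauchy_convergent_iff convergent_LIMSEQ_iff by blast

lemma cf_RF: assumes "summable (\<lambda>i. (x i)\<^sup>2)" shows "cf (RF x) j = x j"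
proof -
  have "(\<lambda>n. cf (G x {..<n}) j) \<longlonglongrightarrow> cf (RF x) j"
    unfolding cf_def by (intro tendsto_intros RF_lim assms)
  moreover have "eventually (\<lambda>n. cf (G x {..<n}) j = x j) sequentially"
    by (rule eventually_sequentiallyI[of "Suc j"]) (simp add: cf_G)
  ultimately have "(\<lambda>n. x j) \<longlonglongrightarrow> cf (RF x) j"
    using Lim_transform_eventually by fastforce
  then show ?thesis using LIMSEQ_const_iff by metis
qed

lemma RF_cf: "RF (cf f) = f"
  by (rule cf_inj) (simp add: cf_RF cf_summable)

lemma expansion: "(\<lambda>n. G (cf f) {..<n}) \<longlonglongrightarrow> f"
  using RF_lim[OF cf_summable, of f] RF_cf by simp

lemma parseval_inner: "(\<lambda>i. cf f i * cf h i) sums inner f h"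
proof -
  have "(\<lambda>n. inner (G (cf f) {..<n}) h) \<longlonglongrightarrow> inner f h"
    by (intro tendsto_intros expansion)
  then show ?thesis by (simp add: sums_def inner_G)
qed

lemma parseval: "(\<lambda>i. (cf f i)\<^sup>2) sums inner f f"
  using parseval_inner[of f f] by (simp add: power2_eq_square)

end

lemma summable_fin_supp: "(\<And>i. i \<ge> N \<Longrightarrow> (x::nat \<Rightarrow> real) i = 0) \<Longrightarrow> summable x"
  by (rule summable_comparison_test'[of "\<lambda>_. 0" N]) auto

lemma tail_tendsto:
  fixes x :: "nat \<Rightarrow> real"
  assumes "summable x"
  shows "(\<lambda>n. \<Sum>i. (if i < n then 0 else x i)) \<longlonglongrightarrow> 0"
proof -
  have eq: "(\<Sum>i. (if i < n then 0 else x i)) = suminf x - (\<Sum>i<n. x i)" for n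
  proof -
    have s1: "summable (\<lambda>i. if i < n then x i else 0)"
      by (rule summable_fin_supp[of n]) auto
    have "(\<lambda>i. if i < n then 0 else x i) = (\<lambda>i. x i - (if i < n then x i else 0))"
      by auto
    then have "(\<Sum>i. (if i < n then 0 else x i)) = suminf x - (\<Sum>i. (if i < n then x i else 0))"
      using suminf_diff[OF assms s1] by simp
    also have "(\<Sum>i. (if i < n then x i else 0)) = (\<Sum>i<n. (if i < n then x i else 0))"
      by (rule suminf_finite) auto
    also have "\<dots> = (\<Sum>i<n. x i)" by simp
    finally show ?thesis .
  qed
  have "(\<lambda>n. suminf x - (\<Sum>i<n. x i)) \<longlonglongrightarrow> suminf x - suminf x"
    by (intro tendsto_intros summable_LIMSEQ assms)
  moreover have "(\<lambda>n. \<Sum>i. (if i < n then 0 else x i)) = (\<lambda>n. suminf x - (\<Sum>i<n. x i))"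
    using eq by blast
  ultimately show ?thesis by simp
qed

lemma sqle: "0 \<le> (u::real) \<Longrightarrow> u \<le> \<bar>v\<bar> \<Longrightarrow> (w * u)\<^sup>2 \<le> (w * v)\<^sup>2"
proof -
  assume "0 \<le> u" "u \<le> \<bar>v\<bar>"
  then have "u\<^sup>2 \<le> v\<^sup>2" by (metis abs_le_square_iff abs_of_nonneg)
  then show ?thesis by (simp add: power_mult_distrib mult_left_mono)
qed

locale st = hb +
  fixes a :: "nat \<Rightarrow> nat \<Rightarrow> real" and k :: "nat \<Rightarrow> nat" and t :: "nat \<Rightarrow> real"
  assumes a_ge1: "\<And>i s. s \<ge> 1 \<Longrightarrow> 1 \<le> a i s"
    and a_mono: "\<And>i s. s \<ge> 1 \<Longrightarrow> a i s \<le> a i (Suc s)"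
    and k_pos: "0 < k 0"
    and k_mono: "strict_mono k"
    and t_nz: "\<And>i. t i \<noteq> 0"
begin

definition W :: "nat \<Rightarrow> nat \<Rightarrow> real" where "W s i = (if s = 0 then 1 else a i s)"

lemma W_ge1: "1 \<le> W s i" using a_ge1 by (simp add: W_def)
lemma W_pos: "0 < W s i" using W_ge1[of s i] by linarith
lemma W_mono: "W s i \<le> W (Suc s) i"
  using a_mono[of s i] a_ge1[of 1 i] by (simp add: W_def)

lemma Wsq_mono: "(W s i * x)\<^sup>2 \<le> (W (Suc s) i * x)\<^sup>2"
proof -
  have "(W s i)\<^sup>2 \<le> (W (Suc s) i)\<^sup>2"
    using W_mono[of s i] W_pos[of s i] by (simp add: power_mono)
  then show ?thesis by (simp add: power_mult_distrib mult_right_mono)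
qed

lemma sq_le_Wsq: "x\<^sup>2 \<le> (W s i * x)\<^sup>2"
proof -
  have "1 \<le> (W s i)\<^sup>2" using W_ge1[of s i] by (simp add: one_le_power)
  from mult_right_mono[OF this, of "x\<^sup>2"] show ?thesis by (simp add: power_mult_distrib)
qed

lemma XS_eq: "XS a e s = {f. summable (\<lambda>i. (W s i * cf f i)\<^sup>2)}"
  by (auto simp: XS_def W_def cf_def cf_summable[unfolded cf_def])

lemma innerS_eq: "innerS a e s f h = (\<Sum>i. (W s i * cf f i) * (W s i * cf h i))"
proof (cases "s = 0")
  case True
  then show ?thesis using sums_unique[OF parseval_inner[of f h]]
    by (simp add: innerS_def W_def)
next
  case False
  then show ?thesis unfolding innerS_def W_def cf_def
    by (simp add: power2_eq_square inner_commute[of "e _"] mult_ac)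
qed

lemma normS_eq: "normS a e s f = sqrt (\<Sum>i. (W s i * cf f i)\<^sup>2)"
  by (simp add: normS_def innerS_eq power2_eq_square)

lemma inner_le_N:
  assumes "summable (\<lambda>i. (W s i * cf f i)\<^sup>2)"
  shows "inner f f \<le> (\<Sum>i. (W s i * cf f i)\<^sup>2)"
proof -
  have "inner f f = (\<Sum>i. (cf f i)\<^sup>2)" using sums_unique[OF parseval] by simp
  also have "\<dots> \<le> (\<Sum>i. (W s i * cf f i)\<^sup>2)"
    by (rule suminf_le[OF sq_le_Wsq cf_summable assms])
  finally show ?thesis .
qed


lemma Ncf_add: "W s i * cf (f + h) i = W s i * cf f i + W s i * cf h i"
  by (simp add: cf_add algebra_simps)
lemma Ncf_diff: "W s i * cf (f - h) i = W s i * cf f i - W s i * cf h i"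
  by (simp add: cf_diff algebra_simps)
lemma Ncf_scale: "W s i * cf (r *\<^sub>R f) i = r * (W s i * cf f i)"
  by (simp add: cf_scale algebra_simps)

lemma XS_add: "f \<in> XS a e s \<Longrightarrow> h \<in> XS a e s \<Longrightarrow> f + h \<in> XS a e s"
  using sq_add_summable[of "\<lambda>i. W s i * cf f i" "\<lambda>i. W s i * cf h i"] by (simp add: XS_eq Ncf_add)
lemma XS_scale: "f \<in> XS a e s \<Longrightarrow> r *\<^sub>R f \<in> XS a e s"
proof -
  assume "f \<in> XS a e s"
  then have "summable (\<lambda>i. r\<^sup>2 * (W s i * cf f i)\<^sup>2)" by (intro summable_mult) (simp add: XS_eq)
  moreover have "(\<lambda>i. (W s i * cf (r *\<^sub>R f) i)\<^sup>2) = (\<lambda>i. r\<^sup>2 * (W s i * cf f i)\<^sup>2)"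
    by (simp add: Ncf_scale power_mult_distrib)
  ultimately show ?thesis by (simp add: XS_eq)
qed
lemma XS_diff: "f \<in> XS a e s \<Longrightarrow> h \<in> XS a e s \<Longrightarrow> f - h \<in> XS a e s"
  using XS_add[of f s "(-1) *\<^sub>R h"] XS_scale[of h s "-1"] by simp
lemma XS_zero: "0 \<in> XS a e s"
  unfolding XS_eq by (simp add: cf_zero)

lemma XS_complete:
  assumes X: "\<And>n. X n \<in> XS a e s"
    and C: "\<And>\<epsilon>. \<epsilon> > 0 \<Longrightarrow> \<exists>N. \<forall>m\<ge>N. \<forall>n\<ge>N. sqrt (innerS a e s (X m - X n) (X m - X n)) < \<epsilon>"
  shows "\<exists>L\<in>XS a e s. (\<lambda>n. sqrt (innerS a e s (X n - L) (X n - L))) \<longlonglongrightarrow> 0"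
proof -
  define Nq where "Nq f = (\<Sum>i. (W s i * cf f i)\<^sup>2)" for f
  have ip: "innerS a e s f f = Nq f" for f
    by (simp add: innerS_eq Nq_def power2_eq_square)
  have summ: "f \<in> XS a e s \<Longrightarrow> summable (\<lambda>i. (W s i * cf f i)\<^sup>2)" for f
    by (simp add: XS_eq)
  have "Cauchy X"
  proof (rule metric_CauchyI)
    fix \<epsilon> :: real assume "\<epsilon> > 0"
    from C[OF this] obtain N where N: "\<And>m n. m \<ge> N \<Longrightarrow> n \<ge> N \<Longrightarrow> sqrt (Nq (X m - X n)) < \<epsilon>"
      by (auto simp: ip)
    have "dist (X m) (X n) < \<epsilon>" if "m \<ge> N" "n \<ge> N" for m n
    proof -
      have "inner (X m - X n) (X m - X n) \<le> Nq (X m - X n)"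
        unfolding Nq_def by (rule inner_le_N, rule summ, intro XS_diff X)
      then have "dist (X m) (X n) \<le> sqrt (Nq (X m - X n))"
        by (simp add: dist_norm norm_eq_sqrt_inner)
      then show ?thesis using N[OF that] by simp
    qed
    then show "\<exists>M. \<forall>m\<ge>M. \<forall>n\<ge>M. dist (X m) (X n) < \<epsilon>" by blast
  qed
  then obtain L where XL: "X \<longlonglongrightarrow> L" using Cauchy_convergent_iff convergent_def by blast
  have cfL: "(\<lambda>m. cf (X m) i) \<longlonglongrightarrow> cf L i" for i
    unfolding cf_def by (intro tendsto_intros XL)
  have main: "\<exists>N. \<forall>n\<ge>N. summable (\<lambda>i. (W s i * cf (X n - L) i)\<^sup>2) \<and>
                 Nq (X n - L) \<le> (\<epsilon>/2)\<^sup>2" if "\<epsilon> > 0" for \<epsilon> :: real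
  proof -
    from C[of "\<epsilon>/2"] that obtain N where
      N: "\<And>m n. m \<ge> N \<Longrightarrow> n \<ge> N \<Longrightarrow> sqrt (Nq (X m - X n)) < \<epsilon>/2"
      by (auto simp: ip)
    have "summable (\<lambda>i. (W s i * cf (X n - L) i)\<^sup>2) \<and> Nq (X n - L) \<le> (\<epsilon>/2)\<^sup>2"
      if n: "n \<ge> N" for n
    proof -
      have part: "(\<Sum>i<M. (W s i * cf (X n - L) i)\<^sup>2) \<le> (\<epsilon>/2)\<^sup>2" for M
      proof -
        have lim: "(\<lambda>m. \<Sum>i<M. (W s i * cf (X n - X m) i)\<^sup>2) \<longlonglongrightarrow> (\<Sum>i<M. (W s i * cf (X n - L) i)\<^sup>2)"
          unfolding cf_diff by (intro tendsto_intros cfL)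
        have "(\<Sum>i<M. (W s i * cf (X n - X m) i)\<^sup>2) \<le> (\<epsilon>/2)\<^sup>2" if m: "m \<ge> N" for m
        proof -
          have "(\<Sum>i<M. (W s i * cf (X n - X m) i)\<^sup>2) \<le> Nq (X n - X m)"
            unfolding Nq_def by (rule sum_le_suminf) (auto intro: summ XS_diff X)
          moreover have "sqrt (Nq (X n - X m)) < \<epsilon>/2" using N[OF n m] .
          moreover have "0 \<le> Nq (X n - X m)"
            unfolding Nq_def by (intro suminf_nonneg summ XS_diff X) simp
          moreover have "(sqrt (Nq (X n - X m)))\<^sup>2 \<le> (\<epsilon>/2)\<^sup>2"
            by (rule power_mono) (use calculation in auto)
          ultimately show ?thesis by simp
        qed
        then show ?thesis using LIMSEQ_le_const2[OF lim] by blast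
      qed
      have sm: "summable (\<lambda>i. (W s i * cf (X n - L) i)\<^sup>2)"
        by (rule bounded_imp_summable[where B="(\<epsilon>/2)\<^sup>2"]) (simp, metis part lessThan_Suc_atMost)
      moreover have "Nq (X n - L) \<le> (\<epsilon>/2)\<^sup>2"
        unfolding Nq_def by (rule suminf_le_const[OF sm part])
      ultimately show ?thesis by blast
    qed
    then show ?thesis by blast
  qed
  obtain N0 where N0: "summable (\<lambda>i. (W s i * cf (X N0 - L) i)\<^sup>2)"
    using main[of 1] by auto
  have "L \<in> XS a e s"
  proof -
    have "X N0 - (X N0 - L) \<in> XS a e s"
      by (rule XS_diff[OF X]) (simp add: XS_eq N0)
    then show ?thesis by simp
  qed
  moreover have "(\<lambda>n. sqrt (innerS a e s (X n - L) (X n - L))) \<longlonglongrightarrow> 0"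
  proof (rule LIMSEQ_I)
    fix r :: real assume "r > 0"
    then obtain N where N: "\<And>n. n \<ge> N \<Longrightarrow> Nq (X n - L) \<le> (r/2)\<^sup>2"
      and NS: "\<And>n. n \<ge> N \<Longrightarrow> summable (\<lambda>i. (W s i * cf (X n - L) i)\<^sup>2)"
      using main[of r] by auto
    have "norm (sqrt (innerS a e s (X n - L) (X n - L)) - 0) < r" if "n \<ge> N" for n
    proof -
      have "sqrt (Nq (X n - L)) \<le> sqrt ((r/2)\<^sup>2)" using N[OF that] by (rule real_sqrt_le_mono)
      also have "\<dots> = r/2" using \<open>r > 0\<close> by simp
      finally have "sqrt (Nq (X n - L)) < r" using \<open>r > 0\<close> by simp
      moreover have "0 \<le> Nq (X n - L)" unfolding Nq_def using NS[OF that] by (intro suminf_nonneg) auto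
      ultimately show ?thesis by (simp add: ip)
    qed
    then show "\<exists>no. \<forall>n\<ge>no. norm (sqrt (innerS a e s (X n - L) (X n - L)) - 0) < r" by blast
  qed
  ultimately show ?thesis by blast
qed

lemma XS_hilbert: "hilbert_on (XS a e s) (innerS a e s)"
proof -
  have summ: "f \<in> XS a e s \<Longrightarrow> summable (\<lambda>i. (W s i * cf f i)\<^sup>2)" for f
    by (simp add: XS_eq)
  have prod: "f \<in> XS a e s \<Longrightarrow> h \<in> XS a e s \<Longrightarrow> summable (\<lambda>i. (W s i * cf f i) * (W s i * cf h i))" for f h
    by (intro sq_prod_summable summ)
  have "subspace (XS a e s)"
    unfolding subspace_def using XS_zero XS_add XS_scale by blast
  moreover have "\<forall>x\<in>XS a e s. \<forall>y\<in>XS a e s. innerS a e s x y = innerS a e s y x"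
    by (simp add: innerS_eq mult.commute)
  moreover have "\<forall>x\<in>XS a e s. \<forall>y\<in>XS a e s. \<forall>z\<in>XS a e s.
      innerS a e s (x + y) z = innerS a e s x z + innerS a e s y z"
  proof (intro ballI)
    fix x y z assume "x \<in> XS a e s" "y \<in> XS a e s" "z \<in> XS a e s"
    then show "innerS a e s (x + y) z = innerS a e s x z + innerS a e s y z"
      unfolding innerS_eq Ncf_add distrib_right using suminf_add[OF prod[of x z] prod[of y z]] by simp
  qed
  moreover have "\<forall>x\<in>XS a e s. \<forall>y\<in>XS a e s. \<forall>r. innerS a e s (r *\<^sub>R x) y = r * innerS a e s x y"
  proof (intro ballI allI)
    fix x y r assume "x \<in> XS a e s" "y \<in> XS a e s"
    then show "innerS a e s (r *\<^sub>R x) y = r * innerS a e s x y"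
      unfolding innerS_eq Ncf_scale using suminf_mult[OF prod[of x y], of r] by (simp add: mult.assoc)
  qed
  moreover have "\<forall>x\<in>XS a e s. 0 \<le> innerS a e s x x"
    by (auto simp: innerS_eq intro!: suminf_nonneg prod)
  moreover have "\<forall>x\<in>XS a e s. innerS a e s x x = 0 \<longrightarrow> x = 0"
  proof (intro ballI impI)
    fix x assume x: "x \<in> XS a e s" and z: "innerS a e s x x = 0"
    have "\<forall>i. (W s i * cf x i) * (W s i * cf x i) = 0"
      using z suminf_eq_zero_iff[OF prod[OF x x]] by (simp add: innerS_eq)
    then have "\<And>i. cf x i = 0" using W_pos by (metis mult_eq_0_iff less_irrefl)
    then show "x = 0" by (rule ortho_zero)
  qed
  moreover have "\<forall>X. (\<forall>n. X n \<in> XS a e s) \<and>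
          (\<forall>\<epsilon>>0. \<exists>N. \<forall>m\<ge>N. \<forall>n\<ge>N. sqrt (innerS a e s (X m - X n) (X m - X n)) < \<epsilon>) \<longrightarrow>
          (\<exists>L\<in>XS a e s. (\<lambda>n. sqrt (innerS a e s (X n - L) (X n - L))) \<longlonglongrightarrow> 0)"
  proof (intro allI impI)
    fix X :: "nat \<Rightarrow> 'a" assume "(\<forall>n. X n \<in> XS a e s) \<and>
          (\<forall>\<epsilon>>0. \<exists>N. \<forall>m\<ge>N. \<forall>n\<ge>N. sqrt (innerS a e s (X m - X n) (X m - X n)) < \<epsilon>)"
    then show "\<exists>L\<in>XS a e s. (\<lambda>n. sqrt (innerS a e s (X n - L) (X n - L))) \<longlonglongrightarrow> 0"
      using XS_complete[of X] by (simp only:)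
  qed
  ultimately show ?thesis unfolding hilbert_on_def by (intro conjI)
qed

lemma XS_mono: "XS a e (Suc s) \<subseteq> XS a e s"
proof
  fix f assume "f \<in> XS a e (Suc s)"
  then have "summable (\<lambda>i. (W (Suc s) i * cf f i)\<^sup>2)" by (simp add: XS_eq)
  then have "summable (\<lambda>i. (W s i * cf f i)\<^sup>2)"
    by (rule summable_comparison_test'[where N=0]) (simp add: Wsq_mono)
  then show "f \<in> XS a e s" by (simp add: XS_eq)
qed

lemma normS_mono: assumes "f \<in> XS a e (Suc s)" shows "normS a e s f \<le> normS a e (Suc s) f"
proof -
  have s1: "summable (\<lambda>i. (W (Suc s) i * cf f i)\<^sup>2)" using assms by (simp add: XS_eq)
  have s0: "summable (\<lambda>i. (W s i * cf f i)\<^sup>2)" using assms XS_mono by (auto simp: XS_eq)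
  show ?thesis unfolding normS_eq
    by (rule real_sqrt_le_mono, rule suminf_le[OF Wsq_mono s0 s1])
qed

lemma cf_Gtrunc: "cf (G (cf f) {..<n}) i = (if i < n then cf f i else 0)"
  by (simp add: cf_G)

lemma G_XF: "G x {..<n} \<in> XF a e"
proof -
  have "summable (\<lambda>i. (W s i * cf (G x {..<n}) i)\<^sup>2)" for s
    by (rule summable_fin_supp[of n]) (simp add: cf_G)
  then show ?thesis unfolding XF_def XS_eq by blast
qed

lemma XF_dense:
  assumes f: "f \<in> XS a e s" and "\<epsilon> > 0"
  shows "\<exists>h\<in>XF a e. normS a e s (f - h) < \<epsilon>"
proof -
  have sm: "summable (\<lambda>i. (W s i * cf f i)\<^sup>2)" using f by (simp add: XS_eq)
  have eq: "(\<Sum>i. (W s i * cf (f - G (cf f) {..<n}) i)\<^sup>2) =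
      (\<Sum>i. (if i < n then 0 else (W s i * cf f i)\<^sup>2))" for n
    by (intro arg_cong[where f=suminf] ext) (simp add: cf_diff cf_Gtrunc)
  from tail_tendsto[OF sm] have "eventually (\<lambda>n. (\<Sum>i. (if i < n then 0 else (W s i * cf f i)\<^sup>2)) < \<epsilon>\<^sup>2) sequentially"
    using \<open>\<epsilon> > 0\<close> by (intro order_tendstoD) auto
  then obtain n where "(\<Sum>i. (if i < n then 0 else (W s i * cf f i)\<^sup>2)) < \<epsilon>\<^sup>2"
    by (auto simp: eventually_sequentially)
  then have "sqrt (\<Sum>i. (if i < n then 0 else (W s i * cf f i)\<^sup>2)) < sqrt (\<epsilon>\<^sup>2)"
    by (rule real_sqrt_less_mono)
  then have "normS a e s (f - G (cf f) {..<n}) < \<epsilon>"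
    unfolding normS_eq eq using \<open>\<epsilon> > 0\<close> by simp
  then show ?thesis using G_XF by blast
qed


subsection \<open>Blocks\<close>

lemma k_ge: "Suc j \<le> k j"
proof (induction j)
  case 0 then show ?case using k_pos by simp
next
  case (Suc j)
  have "k j < k (Suc j)" using k_mono by (simp add: strict_mono_def)
  then show ?case using Suc by simp
qed

lemma k_le: "j \<le> j' \<Longrightarrow> k j \<le> k j'"
  using k_mono strict_mono_less_eq by blast

lemma blk_ex: "\<exists>j. i < k j" using k_ge[of i] by (intro exI[of _ i]) simp

lemma blk_lt: "i < k (blk k i)"
  unfolding blk_def by (rule LeastI_ex[OF blk_ex])

lemma blk_least: "j < blk k i \<Longrightarrow> k j \<le> i"
  unfolding blk_def using not_less_Least by (metis not_less)

lemma blk_le: "blk k i \<le> i"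
  unfolding blk_def using k_ge[of i] by (intro Least_le) simp

lemma blk_mono: "i \<le> i' \<Longrightarrow> blk k i \<le> blk k i'"
  using blk_least[of "blk k i'" i] blk_lt[of i'] by (meson leI le_trans not_less)

lemma blk_ge: "k j \<le> n \<Longrightarrow> j < blk k n"
  using blk_lt[of n] k_le[of "blk k n" j] by (meson leI le_trans not_less)

definition fb :: "nat \<Rightarrow> nat" where "fb j = (if j = 0 then 0 else k (j - 1))"

lemma blk_fb: "blk k (fb j) = j"
proof (cases j)
  case 0
  then show ?thesis unfolding blk_def fb_def using k_pos by (intro Least_equality) auto
next
  case (Suc j')
  have lt: "k j' < k (Suc j')" using k_mono by (simp add: strict_mono_def)
  show ?thesis unfolding blk_def fb_def using Suc lt
    by (intro Least_equality) (auto, metis k_le leD not_less_eq_eq)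
qed

definition Bk :: "nat \<Rightarrow> nat set" where "Bk j = {i. blk k i = j}"

lemma Bk_finite: "finite (Bk j)"
proof (rule finite_subset)
  show "Bk j \<subseteq> {..<k j}" unfolding Bk_def using blk_lt by auto
qed simp

lemma fb_in: "fb j \<in> Bk j" by (simp add: Bk_def blk_fb)
lemma Bk_ne: "Bk j \<noteq> {}" using fb_in by blast

definition mx :: "(nat \<Rightarrow> real) \<Rightarrow> nat \<Rightarrow> real" where
  "mx c j = Max ((\<lambda>i. \<bar>c i\<bar> / \<bar>t i\<bar>) ` Bk j)"

lemma mx_ge: "i \<in> Bk j \<Longrightarrow> \<bar>c i\<bar> / \<bar>t i\<bar> \<le> mx c j"
  unfolding mx_def using Bk_finite by (intro Max_ge) auto

lemma mx_ge': "\<bar>c i\<bar> / \<bar>t i\<bar> \<le> mx c (blk k i)"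
  by (rule mx_ge) (simp add: Bk_def)

lemma mx_le_iff: "mx c j \<le> r \<longleftrightarrow> (\<forall>i\<in>Bk j. \<bar>c i\<bar> / \<bar>t i\<bar> \<le> r)"
  unfolding mx_def using Bk_finite Bk_ne by (simp add: Max_le_iff)

lemma mx_attained: "\<exists>i\<in>Bk j. mx c j = \<bar>c i\<bar> / \<bar>t i\<bar>"
proof -
  have "mx c j \<in> (\<lambda>i. \<bar>c i\<bar> / \<bar>t i\<bar>) ` Bk j"
    unfolding mx_def using Bk_finite Bk_ne by (intro Max_in) auto
  then show ?thesis by auto
qed

lemma mx_nonneg: "0 \<le> mx c j"
  using mx_ge[OF fb_in, of c j] by (smt (verit) divide_nonneg_nonneg abs_ge_zero)

lemma mx_add: "mx (seq_add c d) j \<le> mx c j + mx d j"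
proof (subst mx_le_iff, intro ballI)
  fix i assume i: "i \<in> Bk j"
  have "\<bar>c i + d i\<bar> / \<bar>t i\<bar> \<le> (\<bar>c i\<bar> + \<bar>d i\<bar>) / \<bar>t i\<bar>"
    by (intro divide_right_mono abs_triangle_ineq) simp
  also have "\<dots> = \<bar>c i\<bar> / \<bar>t i\<bar> + \<bar>d i\<bar> / \<bar>t i\<bar>" by (simp add: add_divide_distrib)
  also have "\<dots> \<le> mx c j + mx d j" using mx_ge[OF i] by (intro add_mono) auto
  finally show "\<bar>seq_add c d i\<bar> / \<bar>t i\<bar> \<le> mx c j + mx d j" by (simp add: seq_add_def)
qed

lemma mx_diff: "mx (seq_diff c d) j \<le> mx c j + mx d j"
proof (subst mx_le_iff, intro ballI)
  fix i assume i: "i \<in> Bk j"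
  have "\<bar>c i - d i\<bar> / \<bar>t i\<bar> \<le> (\<bar>c i\<bar> + \<bar>d i\<bar>) / \<bar>t i\<bar>"
    by (intro divide_right_mono abs_triangle_ineq4) simp
  also have "\<dots> = \<bar>c i\<bar> / \<bar>t i\<bar> + \<bar>d i\<bar> / \<bar>t i\<bar>" by (simp add: add_divide_distrib)
  also have "\<dots> \<le> mx c j + mx d j" using mx_ge[OF i] by (intro add_mono) auto
  finally show "\<bar>seq_diff c d i\<bar> / \<bar>t i\<bar> \<le> mx c j + mx d j" by (simp add: seq_diff_def)
qed

lemma mx_scale: "mx (seq_scale r c) j = \<bar>r\<bar> * mx c j"
proof (rule antisym)
  show "mx (seq_scale r c) j \<le> \<bar>r\<bar> * mx c j"
  proof (subst mx_le_iff, intro ballI)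
    fix i assume i: "i \<in> Bk j"
    have "\<bar>r * c i\<bar> / \<bar>t i\<bar> = \<bar>r\<bar> * (\<bar>c i\<bar> / \<bar>t i\<bar>)" by (simp add: abs_mult)
    also have "\<dots> \<le> \<bar>r\<bar> * mx c j" using mx_ge[OF i] by (intro mult_left_mono) auto
    finally show "\<bar>seq_scale r c i\<bar> / \<bar>t i\<bar> \<le> \<bar>r\<bar> * mx c j" by (simp add: seq_scale_def)
  qed
  obtain i where i: "i \<in> Bk j" "mx c j = \<bar>c i\<bar> / \<bar>t i\<bar>" using mx_attained by blast
  have "\<bar>r\<bar> * mx c j = \<bar>seq_scale r c i\<bar> / \<bar>t i\<bar>" using i by (simp add: seq_scale_def abs_mult)
  also have "\<dots> \<le> mx (seq_scale r c) j" by (rule mx_ge[OF i(1)])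
  finally show "\<bar>r\<bar> * mx c j \<le> mx (seq_scale r c) j" .
qed

lemma mx_diff_sym: "mx (seq_diff c d) j = mx (seq_diff d c) j"
  unfolding mx_def seq_diff_def by (simp add: abs_minus_commute)

lemma mx_zero_iff: "(\<forall>j. mx c j = 0) \<Longrightarrow> c = seq_zero"
proof (rule ext)
  fix i assume "\<forall>j. mx c j = 0"
  then have "\<bar>c i\<bar> / \<bar>t i\<bar> \<le> 0" using mx_ge'[of c i] by simp
  then show "c i = seq_zero i" using t_nz[of i] by (simp add: seq_zero_def divide_le_0_iff)
qed

lemma mx_supp: "(\<And>i. i \<ge> N \<Longrightarrow> c i = 0) \<Longrightarrow> j \<ge> N \<Longrightarrow> mx c j = 0"
proof -
  assume c: "\<And>i. i \<ge> N \<Longrightarrow> c i = 0" and j: "j \<ge> N"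
  have "mx c j \<le> 0"
  proof (subst mx_le_iff, intro ballI)
    fix i assume "i \<in> Bk j"
    then have "j \<le> i" using blk_le by (auto simp: Bk_def)
    then show "\<bar>c i\<bar> / \<bar>t i\<bar> \<le> 0" using c j by simp
  qed
  then show ?thesis using mx_nonneg[of c j] by simp
qed

lemma gfun_eq: "gfun t e k i f = t i * cf f (blk k i)"
  by (simp add: gfun_def cf_def)

lemma mx_g: "mx (\<lambda>i. gfun t e k i f) j = \<bar>cf f j\<bar>"
proof -
  have "(\<lambda>i. \<bar>gfun t e k i f\<bar> / \<bar>t i\<bar>) ` Bk j = {\<bar>cf f j\<bar>}"
    using Bk_ne t_nz by (auto simp: Bk_def gfun_eq abs_mult)
  then show ?thesis by (simp add: mx_def)
qed

subsection \<open>Theta spaces\<close>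

lemma Mset_iff: "f \<in> Mset a e t k s c \<longleftrightarrow> f \<in> XS a e s \<and> (\<forall>j. mx c j \<le> \<bar>cf f j\<bar>)"
proof -
  have "(\<forall>i. \<bar>c i\<bar> \<le> \<bar>gfun t e k i f\<bar>) \<longleftrightarrow> (\<forall>j. mx c j \<le> \<bar>cf f j\<bar>)"
  proof
    assume H: "\<forall>i. \<bar>c i\<bar> \<le> \<bar>gfun t e k i f\<bar>"
    show "\<forall>j. mx c j \<le> \<bar>cf f j\<bar>"
    proof (intro allI, subst mx_le_iff, intro ballI)
      fix j i assume "i \<in> Bk j"
      then have "blk k i = j" by (simp add: Bk_def)
      then have "\<bar>c i\<bar> \<le> \<bar>t i\<bar> * \<bar>cf f j\<bar>" using H by (auto simp: gfun_eq abs_mult)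
      then show "\<bar>c i\<bar> / \<bar>t i\<bar> \<le> \<bar>cf f j\<bar>" using t_nz[of i]
        by (simp add: divide_le_eq mult.commute)
    qed
  next
    assume H: "\<forall>j. mx c j \<le> \<bar>cf f j\<bar>"
    show "\<forall>i. \<bar>c i\<bar> \<le> \<bar>gfun t e k i f\<bar>"
    proof
      fix i
      have "\<bar>c i\<bar> / \<bar>t i\<bar> \<le> \<bar>cf f (blk k i)\<bar>" using mx_ge'[of c i] H order_trans by blast
      then show "\<bar>c i\<bar> \<le> \<bar>gfun t e k i f\<bar>" using t_nz[of i]
        by (simp add: divide_le_eq gfun_eq abs_mult mult.commute)
    qed
  qed
  then show ?thesis by (simp add: Mset_def)
qed

abbreviation Nm :: "nat \<Rightarrow> (nat \<Rightarrow> real) \<Rightarrow> real" where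
  "Nm s c \<equiv> sqrt (\<Sum>j. (W s j * mx c j)\<^sup>2)"

lemma ThetaS_iff: "c \<in> ThetaS a e t k s \<longleftrightarrow> summable (\<lambda>j. (W s j * mx c j)\<^sup>2)"
proof
  assume "c \<in> ThetaS a e t k s"
  then obtain f where f: "f \<in> Mset a e t k s c" by (auto simp: ThetaS_def)
  then have sf: "summable (\<lambda>j. (W s j * cf f j)\<^sup>2)" and le: "\<And>j. mx c j \<le> \<bar>cf f j\<bar>"
    by (auto simp: Mset_iff XS_eq)
  show "summable (\<lambda>j. (W s j * mx c j)\<^sup>2)"
    by (rule summable_comparison_test'[OF sf, where N=0]) (simp add: sqle mx_nonneg le)
next
  assume sm: "summable (\<lambda>j. (W s j * mx c j)\<^sup>2)"
  have s0: "summable (\<lambda>j. (mx c j)\<^sup>2)"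
    by (rule summable_comparison_test'[OF sm, where N=0]) (simp add: sq_le_Wsq)
  have "RF (mx c) \<in> Mset a e t k s c"
    unfolding Mset_iff XS_eq using sm by (simp add: cf_RF[OF s0] abs_ge_self)
  then show "c \<in> ThetaS a e t k s" by (auto simp: ThetaS_def)
qed

lemma normTh_eq:
  assumes "c \<in> ThetaS a e t k s" shows "normTh a e t k s c = Nm s c"
proof -
  have sm: "summable (\<lambda>j. (W s j * mx c j)\<^sup>2)" using assms ThetaS_iff by blast
  have s0: "summable (\<lambda>j. (mx c j)\<^sup>2)"
    by (rule summable_comparison_test'[OF sm, where N=0]) (simp add: sq_le_Wsq)
  have inM: "RF (mx c) \<in> Mset a e t k s c"
    unfolding Mset_iff XS_eq using sm by (simp add: cf_RF[OF s0] abs_ge_self)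
  have val: "normS a e s (RF (mx c)) = Nm s c"
    by (simp add: normS_eq cf_RF[OF s0])
  have low: "Nm s c \<le> normS a e s f" if "f \<in> Mset a e t k s c" for f
  proof -
    have sf: "summable (\<lambda>j. (W s j * cf f j)\<^sup>2)" and le: "\<And>j. mx c j \<le> \<bar>cf f j\<bar>"
      using that by (auto simp: Mset_iff XS_eq)
    show ?thesis unfolding normS_eq
      by (rule real_sqrt_le_mono, rule suminf_le[OF _ sm sf]) (simp add: sqle mx_nonneg le)
  qed
  show ?thesis unfolding normTh_def
  proof (rule cInf_eq_minimum[of "Nm s c"])
    show "Nm s c \<in> normS a e s ` Mset a e t k s c" using inM val by (metis image_eqI)
  qed (use low in auto)
qed


lemma Th_summ: "c \<in> ThetaS a e t k s \<Longrightarrow> summable (\<lambda>j. (W s j * mx c j)\<^sup>2)"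
  using ThetaS_iff by blast


lemma Th_le:
  assumes "c \<in> ThetaS a e t k s" "d \<in> ThetaS a e t k s"
    and le: "\<And>j. mx x j \<le> mx c j + mx d j"
  shows "x \<in> ThetaS a e t k s" "Nm s x \<le> Nm s c + Nm s d"
proof -
  have sc: "summable (\<lambda>j. (W s j * mx c j)\<^sup>2)" and sd: "summable (\<lambda>j. (W s j * mx d j)\<^sup>2)"
    using assms Th_summ by auto
  have ssum: "summable (\<lambda>j. (W s j * mx c j + W s j * mx d j)\<^sup>2)"
    by (rule sq_add_summable[OF sc sd])
  have cmp: "(W s j * mx x j)\<^sup>2 \<le> (W s j * mx c j + W s j * mx d j)\<^sup>2" for j
  proof -
    have "(W s j * mx x j)\<^sup>2 \<le> (W s j * (mx c j + mx d j))\<^sup>2"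
      by (rule sqle[OF mx_nonneg]) (use le[of j] mx_nonneg[of c j] mx_nonneg[of d j] in simp)
    then show ?thesis by (simp add: algebra_simps)
  qed
  have sx: "summable (\<lambda>j. (W s j * mx x j)\<^sup>2)"
    by (rule summable_comparison_test'[OF ssum, where N=0]) (simp add: cmp)
  then show "x \<in> ThetaS a e t k s" by (simp add: ThetaS_iff)
  have "Nm s x \<le> sqrt (\<Sum>j. (W s j * mx c j + W s j * mx d j)\<^sup>2)"
    by (rule real_sqrt_le_mono, rule suminf_le[OF cmp sx ssum])
  also have "\<dots> \<le> Nm s c + Nm s d"
  proof -
    define x1 where "x1 = (\<lambda>j. W s j * mx c j)"
    define y1 where "y1 = (\<lambda>j. W s j * mx d j)"
    have s1: "summable (\<lambda>j. (x1 j)\<^sup>2)" "summable (\<lambda>j. (y1 j)\<^sup>2)" using sc sd by (auto simp: x1_def y1_def)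
    have s2: "summable (\<lambda>j. (x1 j + y1 j)\<^sup>2)" by (rule sq_add_summable[OF s1])
    have nRF: "norm (RF z) = sqrt (\<Sum>j. (z j)\<^sup>2)" if "summable (\<lambda>j. (z j)\<^sup>2)" for z
      using sums_unique[OF parseval[of "RF z"]] cf_RF[OF that] by (simp add: norm_eq_sqrt_inner)
    have "RF (\<lambda>j. x1 j + y1 j) = RF x1 + RF y1"
      by (rule cf_inj) (simp add: cf_add cf_RF s1 s2)
    then have "sqrt (\<Sum>j. (x1 j + y1 j)\<^sup>2) = norm (RF x1 + RF y1)" using nRF[OF s2] by simp
    also have "\<dots> \<le> norm (RF x1) + norm (RF y1)" by (rule norm_triangle_ineq)
    finally show ?thesis using nRF[OF s1(1)] nRF[OF s1(2)] by (simp add: x1_def y1_def)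
  qed
  finally show "Nm s x \<le> Nm s c + Nm s d" .
qed

lemma Th_add: "c \<in> ThetaS a e t k s \<Longrightarrow> d \<in> ThetaS a e t k s \<Longrightarrow> seq_add c d \<in> ThetaS a e t k s"
  using Th_le(1)[OF _ _ mx_add] by blast
lemma Th_diff: "c \<in> ThetaS a e t k s \<Longrightarrow> d \<in> ThetaS a e t k s \<Longrightarrow> seq_diff c d \<in> ThetaS a e t k s"
  using Th_le(1)[OF _ _ mx_diff] by blast
lemma Nm_add: "c \<in> ThetaS a e t k s \<Longrightarrow> d \<in> ThetaS a e t k s \<Longrightarrow> Nm s (seq_add c d) \<le> Nm s c + Nm s d"
  using Th_le(2)[OF _ _ mx_add] by blast

lemma Nm_scale: assumes "c \<in> ThetaS a e t k s" shows "Nm s (seq_scale r c) = \<bar>r\<bar> * Nm s c"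
proof -
  have "(\<lambda>j. (W s j * mx (seq_scale r c) j)\<^sup>2) = (\<lambda>j. r\<^sup>2 * (W s j * mx c j)\<^sup>2)"
    by (simp add: mx_scale power_mult_distrib mult_ac)
  then show ?thesis using suminf_mult[OF Th_summ[OF assms], of "r\<^sup>2"] by (simp add: real_sqrt_mult)
qed

lemma Th_scale: "c \<in> ThetaS a e t k s \<Longrightarrow> seq_scale r c \<in> ThetaS a e t k s"
proof -
  assume "c \<in> ThetaS a e t k s"
  then have "summable (\<lambda>j. r\<^sup>2 * (W s j * mx c j)\<^sup>2)" by (intro summable_mult Th_summ)
  moreover have "(\<lambda>j. (W s j * mx (seq_scale r c) j)\<^sup>2) = (\<lambda>j. r\<^sup>2 * (W s j * mx c j)\<^sup>2)"
    by (simp add: mx_scale power_mult_distrib mult_ac)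
  ultimately show ?thesis by (simp add: ThetaS_iff)
qed

lemma Th_fin: assumes "\<And>i. i \<ge> N \<Longrightarrow> c i = 0" shows "c \<in> ThetaS a e t k s"
  unfolding ThetaS_iff by (rule summable_fin_supp[of N]) (simp add: mx_supp[of N c, OF assms])

lemma Th_zero: "seq_zero \<in> ThetaS a e t k s"
  by (rule Th_fin[of 0]) (simp add: seq_zero_def)

lemma Th_partial: "seq_partial \<alpha> n \<in> ThetaS a e t k s"
  by (rule Th_fin[of n]) (simp add: seq_partial_def)

lemma Th_unit: "unit_seq j \<in> ThetaS a e t k s"
  by (rule Th_fin[of "Suc j"]) (simp add: unit_seq_def)

lemma Nm_zero: "Nm s seq_zero = 0"
  using mx_supp[of 0 seq_zero] by (simp add: seq_zero_def)

lemma Nm_eq0: assumes "c \<in> ThetaS a e t k s" "Nm s c = 0" shows "c = seq_zero"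
proof -
  have sm: "summable (\<lambda>j. (W s j * mx c j)\<^sup>2)" using assms Th_summ by blast
  have "(\<Sum>j. (W s j * mx c j)\<^sup>2) = 0"
    using assms(2) suminf_nonneg[OF sm] by simp
  then have "\<forall>j. (W s j * mx c j)\<^sup>2 = 0" using suminf_eq_zero_iff[OF sm] by simp
  then have "\<forall>j. W s j = 0 \<or> mx c j = 0" by simp
  have "\<forall>j. mx c j = 0"
  proof
    fix j
    have "W s j = 0 \<or> mx c j = 0" using \<open>\<forall>j. W s j = 0 \<or> mx c j = 0\<close> by blast
    moreover have "W s j \<noteq> 0" using W_pos[of s j] by simp
    ultimately show "mx c j = 0" by simp
  qed
  then show ?thesis by (rule mx_zero_iff)
qed

lemma mx_le_Nm: assumes "c \<in> ThetaS a e t k s" shows "mx c j \<le> Nm s c"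
proof -
  have sm: "summable (\<lambda>j. (W s j * mx c j)\<^sup>2)" using assms Th_summ by blast
  have "(\<Sum>j\<in>{j}. (W s j * mx c j)\<^sup>2) \<le> (\<Sum>j. (W s j * mx c j)\<^sup>2)"
    by (rule sum_le_suminf[OF sm]) auto
  then have "W s j * mx c j \<le> Nm s c" by (intro real_le_rsqrt) simp
  moreover have "mx c j \<le> W s j * mx c j"
    using mult_right_mono[OF W_ge1[of s j] mx_nonneg[of c j]] by simp
  ultimately show ?thesis by linarith
qed

lemma coord_bound: assumes "c \<in> ThetaS a e t k s" shows "\<bar>c i\<bar> \<le> \<bar>t i\<bar> * Nm s c"
proof -
  have "\<bar>c i\<bar> / \<bar>t i\<bar> \<le> Nm s c" using mx_ge'[of c i] mx_le_Nm[OF assms] by (rule order_trans)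
  then show ?thesis using t_nz[of i] by (simp add: divide_le_eq mult.commute)
qed

lemma Th_mono: "ThetaS a e t k (Suc s) \<subseteq> ThetaS a e t k s"
proof
  fix c assume "c \<in> ThetaS a e t k (Suc s)"
  then have "summable (\<lambda>j. (W (Suc s) j * mx c j)\<^sup>2)" by (rule Th_summ)
  then have "summable (\<lambda>j. (W s j * mx c j)\<^sup>2)"
    by (rule summable_comparison_test'[where N=0]) (simp add: Wsq_mono)
  then show "c \<in> ThetaS a e t k s" by (simp add: ThetaS_iff)
qed

lemma Nm_mono: assumes "c \<in> ThetaS a e t k (Suc s)" shows "Nm s c \<le> Nm (Suc s) c"
  using Th_summ[OF assms] Th_summ[OF subsetD[OF Th_mono assms]]
  by (intro real_sqrt_le_mono suminf_le Wsq_mono)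

lemma filterlim_blk: "filterlim (blk k) at_top sequentially"
  unfolding filterlim_at_top
proof
  fix Z show "eventually (\<lambda>n. Z \<le> blk k n) sequentially"
    by (rule eventually_sequentiallyI[of "k Z"]) (simp add: blk_ge less_imp_le)
qed

lemma tail_Nm:
  assumes "c \<in> ThetaS a e t k s"
  shows "(\<lambda>n. Nm s (seq_diff c (seq_partial c n))) \<longlonglongrightarrow> 0"
proof -
  have sm: "summable (\<lambda>j. (W s j * mx c j)\<^sup>2)" using assms Th_summ by blast
  define T where "T m = (\<Sum>j. (if j < m then 0 else (W s j * mx c j)\<^sup>2))" for m
  have TT: "T \<longlonglongrightarrow> 0" unfolding T_def by (rule tail_tendsto[OF sm])
  have Tb: "(\<lambda>n. T (blk k n)) \<longlonglongrightarrow> 0" by (rule filterlim_compose[OF TT filterlim_blk])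
  have bound: "Nm s (seq_diff c (seq_partial c n)) \<le> sqrt (T (blk k n)) \<and> 0 \<le> Nm s (seq_diff c (seq_partial c n))" for n
  proof -
    let ?d = "seq_diff c (seq_partial c n)"
    have d: "?d i = (if i < n then 0 else c i)" for i by (simp add: seq_diff_def seq_partial_def)
    have cmp: "(W s j * mx ?d j)\<^sup>2 \<le> (if j < blk k n then 0 else (W s j * mx c j)\<^sup>2)" for j
    proof (cases "j < blk k n")
      case True
      have "mx ?d j \<le> 0"
      proof (subst mx_le_iff, intro ballI)
        fix i assume "i \<in> Bk j"
        then have "blk k i < blk k n" using True by (simp add: Bk_def)
        then have "i < n" using blk_mono[of n i] by (meson not_less)
        then show "\<bar>?d i\<bar> / \<bar>t i\<bar> \<le> 0" by (simp add: d)
      qed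
      then have "mx ?d j = 0" using mx_nonneg[of ?d j] by simp
      then show ?thesis using True by simp
    next
      case False
      have "mx ?d j \<le> mx c j"
      proof (subst mx_le_iff, intro ballI)
        fix i assume i: "i \<in> Bk j"
        have "\<bar>?d i\<bar> / \<bar>t i\<bar> \<le> \<bar>c i\<bar> / \<bar>t i\<bar>" by (intro divide_right_mono) (auto simp: d)
        then show "\<bar>?d i\<bar> / \<bar>t i\<bar> \<le> mx c j" using mx_ge[OF i] by (rule order_trans)
      qed
      then show ?thesis using False mx_nonneg[of ?d j] by (simp add: sqle)
    qed
    have s2: "summable (\<lambda>j. (if j < blk k n then 0 else (W s j * mx c j)\<^sup>2))"
      by (rule summable_comparison_test'[OF sm, where N=0]) auto
    have s1: "summable (\<lambda>j. (W s j * mx ?d j)\<^sup>2)"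
      by (rule summable_comparison_test'[OF s2, where N=0]) (simp only: real_norm_def abs_power2 cmp)
    have "0 \<le> (\<Sum>j. (W s j * mx ?d j)\<^sup>2)" by (rule suminf_nonneg[OF s1]) simp
    moreover have "Nm s ?d \<le> sqrt (T (blk k n))"
      unfolding T_def by (rule real_sqrt_le_mono, rule suminf_le[OF cmp s1 s2])
    ultimately show ?thesis by simp
  qed
  have "(\<lambda>n. sqrt (T (blk k n))) \<longlonglongrightarrow> sqrt 0" by (intro tendsto_intros Tb)
  then have h1: "(\<lambda>n. sqrt (T (blk k n))) \<longlonglongrightarrow> 0" by simp
  have h2: "eventually (\<lambda>n. 0 \<le> Nm s (seq_diff c (seq_partial c n))) sequentially"
    using bound by (intro always_eventually allI) blast
  have h3: "eventually (\<lambda>n. Nm s (seq_diff c (seq_partial c n)) \<le> sqrt (T (blk k n))) sequentially"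
    using bound by (intro always_eventually allI) blast
  show ?thesis by (rule tendsto_sandwich[OF h2 h3 tendsto_const h1])
qed


lemma tendsto_Max_fin:
  fixes f :: "nat \<Rightarrow> nat \<Rightarrow> real"
  assumes "finite A" "A \<noteq> {}" "\<And>i. i \<in> A \<Longrightarrow> (\<lambda>m. f m i) \<longlonglongrightarrow> g i"
  shows "(\<lambda>m. Max ((\<lambda>i. f m i) ` A)) \<longlonglongrightarrow> Max (g ` A)"
  using assms
proof (induction A rule: finite_ne_induct)
  case (singleton x)
  then show ?case by simp
next
  case (insert x A)
  have eq: "Max ((\<lambda>i. f m i) ` insert x A) = max (f m x) (Max ((\<lambda>i. f m i) ` A))" for m
    using insert.hyps by (simp add: Max_insert)
  have eq2: "Max (g ` insert x A) = max (g x) (Max (g ` A))"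
    using insert.hyps by (simp add: Max_insert)
  have "(\<lambda>m. max (f m x) (Max ((\<lambda>i. f m i) ` A))) \<longlonglongrightarrow> max (g x) (Max (g ` A))"
    by (intro tendsto_max insert.prems insert.IH) auto
  then show ?case by (simp only: eq eq2)
qed

lemma mx_tendsto:
  assumes "\<And>i. (\<lambda>m. c m i) \<longlonglongrightarrow> d i"
  shows "(\<lambda>m. mx (c m) j) \<longlonglongrightarrow> mx d j"
  unfolding mx_def
  by (rule tendsto_Max_fin[OF Bk_finite Bk_ne]) (intro tendsto_intros assms, use t_nz in simp)

lemma Th_complete:
  assumes X: "\<And>n. X n \<in> ThetaS a e t k s"
    and C: "\<And>\<epsilon>. \<epsilon> > 0 \<Longrightarrow> \<exists>N. \<forall>m\<ge>N. \<forall>n\<ge>N. normTh a e t k s (seq_diff (X m) (X n)) < \<epsilon>"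
  shows "\<exists>L\<in>ThetaS a e t k s. (\<lambda>n. normTh a e t k s (seq_diff (X n) L)) \<longlonglongrightarrow> 0"
proof -
  have XD: "seq_diff (X m) (X n) \<in> ThetaS a e t k s" for m n by (intro Th_diff X)
  have C': "\<exists>N. \<forall>m\<ge>N. \<forall>n\<ge>N. Nm s (seq_diff (X m) (X n)) < \<epsilon>" if "\<epsilon> > 0" for \<epsilon>
    using C[OF that] by (simp add: normTh_eq[OF XD])
  have cau: "Cauchy (\<lambda>n. X n i)" for i
  proof (rule metric_CauchyI)
    fix \<epsilon> :: real assume "\<epsilon> > 0"
    have ti: "\<bar>t i\<bar> > 0" using t_nz[of i] by simp
    obtain N where N: "\<And>m n. m \<ge> N \<Longrightarrow> n \<ge> N \<Longrightarrow> Nm s (seq_diff (X m) (X n)) < \<epsilon> / \<bar>t i\<bar>"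
      using C'[of "\<epsilon> / \<bar>t i\<bar>"] \<open>\<epsilon> > 0\<close> ti by auto
    have "dist (X m i) (X n i) < \<epsilon>" if "m \<ge> N" "n \<ge> N" for m n
    proof -
      have "dist (X m i) (X n i) = \<bar>seq_diff (X m) (X n) i\<bar>" by (simp add: dist_real_def seq_diff_def)
      also have "\<dots> \<le> \<bar>t i\<bar> * Nm s (seq_diff (X m) (X n))" by (rule coord_bound[OF XD])
      also have "\<dots> < \<bar>t i\<bar> * (\<epsilon> / \<bar>t i\<bar>)" using N[OF that] ti by (intro mult_strict_left_mono)
      also have "\<dots> = \<epsilon>" using ti by simp
      finally show ?thesis .
    qed
    then show "\<exists>M. \<forall>m\<ge>M. \<forall>n\<ge>M. dist (X m i) (X n i) < \<epsilon>" by blast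
  qed
  define L where "L i = lim (\<lambda>n. X n i)" for i
  have XL: "(\<lambda>n. X n i) \<longlonglongrightarrow> L i" for i
    unfolding L_def using cau[of i] Cauchy_convergent_iff convergent_LIMSEQ_iff by blast
  have main: "\<exists>N. \<forall>n\<ge>N. summable (\<lambda>j. (W s j * mx (seq_diff (X n) L) j)\<^sup>2) \<and>
                 (\<Sum>j. (W s j * mx (seq_diff (X n) L) j)\<^sup>2) \<le> (\<epsilon>/2)\<^sup>2" if "\<epsilon> > 0" for \<epsilon> :: real
  proof -
    from C'[of "\<epsilon>/2"] that obtain N where
      N: "\<And>m n. m \<ge> N \<Longrightarrow> n \<ge> N \<Longrightarrow> Nm s (seq_diff (X m) (X n)) < \<epsilon>/2"
      by auto
    have "summable (\<lambda>j. (W s j * mx (seq_diff (X n) L) j)\<^sup>2) \<and>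
          (\<Sum>j. (W s j * mx (seq_diff (X n) L) j)\<^sup>2) \<le> (\<epsilon>/2)\<^sup>2"
      if n: "n \<ge> N" for n
    proof -
      have part: "(\<Sum>j<M. (W s j * mx (seq_diff (X n) L) j)\<^sup>2) \<le> (\<epsilon>/2)\<^sup>2" for M
      proof -
        have dl: "(\<lambda>m. seq_diff (X n) (X m) i) \<longlonglongrightarrow> seq_diff (X n) L i" for i
          unfolding seq_diff_def by (intro tendsto_intros XL)
        have lim: "(\<lambda>m. \<Sum>j<M. (W s j * mx (seq_diff (X n) (X m)) j)\<^sup>2) \<longlonglongrightarrow>
            (\<Sum>j<M. (W s j * mx (seq_diff (X n) L) j)\<^sup>2)"
          by (intro tendsto_intros mx_tendsto dl)
        have "(\<Sum>j<M. (W s j * mx (seq_diff (X n) (X m)) j)\<^sup>2) \<le> (\<epsilon>/2)\<^sup>2" if m: "m \<ge> N" for m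
        proof -
          have sm: "summable (\<lambda>j. (W s j * mx (seq_diff (X n) (X m)) j)\<^sup>2)" by (rule Th_summ[OF XD])
          have "(\<Sum>j<M. (W s j * mx (seq_diff (X n) (X m)) j)\<^sup>2) \<le> (\<Sum>j. (W s j * mx (seq_diff (X n) (X m)) j)\<^sup>2)"
            by (rule sum_le_suminf[OF sm]) auto
          moreover have "Nm s (seq_diff (X n) (X m)) < \<epsilon>/2" using N[OF n m] .
          moreover have "0 \<le> (\<Sum>j. (W s j * mx (seq_diff (X n) (X m)) j)\<^sup>2)"
            by (rule suminf_nonneg[OF sm]) simp
          moreover have "(Nm s (seq_diff (X n) (X m)))\<^sup>2 \<le> (\<epsilon>/2)\<^sup>2"
            by (rule power_mono) (use calculation in auto)
          ultimately show ?thesis by simp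
        qed
        then show ?thesis using LIMSEQ_le_const2[OF lim] by blast
      qed
      have sm: "summable (\<lambda>j. (W s j * mx (seq_diff (X n) L) j)\<^sup>2)"
        by (rule bounded_imp_summable[where B="(\<epsilon>/2)\<^sup>2"]) (simp, metis part lessThan_Suc_atMost)
      moreover have "(\<Sum>j. (W s j * mx (seq_diff (X n) L) j)\<^sup>2) \<le> (\<epsilon>/2)\<^sup>2"
        by (rule suminf_le_const[OF sm part])
      ultimately show ?thesis by blast
    qed
    then show ?thesis by blast
  qed
  obtain N0 where N0: "summable (\<lambda>j. (W s j * mx (seq_diff (X N0) L) j)\<^sup>2)"
    using main[of 1] by auto
  have LD: "seq_diff (X N0) L \<in> ThetaS a e t k s" using N0 by (simp add: ThetaS_iff)
  have eqL: "L = seq_diff (X N0) (seq_diff (X N0) L)" by (simp add: seq_diff_def)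
  have Lin: "L \<in> ThetaS a e t k s" by (rule ssubst[OF eqL], rule Th_diff[OF X LD])
  moreover have "(\<lambda>n. normTh a e t k s (seq_diff (X n) L)) \<longlonglongrightarrow> 0"
  proof (rule LIMSEQ_I)
    fix r :: real assume "r > 0"
    then obtain N where N: "\<And>n. n \<ge> N \<Longrightarrow> (\<Sum>j. (W s j * mx (seq_diff (X n) L) j)\<^sup>2) \<le> (r/2)\<^sup>2"
      and NS: "\<And>n. n \<ge> N \<Longrightarrow> summable (\<lambda>j. (W s j * mx (seq_diff (X n) L) j)\<^sup>2)"
      using main[of r] by auto
    have "norm (normTh a e t k s (seq_diff (X n) L) - 0) < r" if "n \<ge> N" for n
    proof -
      have eq: "normTh a e t k s (seq_diff (X n) L) = Nm s (seq_diff (X n) L)"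
        by (rule normTh_eq[OF Th_diff[OF X Lin]])
      have "Nm s (seq_diff (X n) L) \<le> sqrt ((r/2)\<^sup>2)" using N[OF that] by (rule real_sqrt_le_mono)
      also have "\<dots> = r/2" using \<open>r > 0\<close> by simp
      finally have "Nm s (seq_diff (X n) L) < r" using \<open>r > 0\<close> by simp
      moreover have "0 \<le> (\<Sum>j. (W s j * mx (seq_diff (X n) L) j)\<^sup>2)"
        using NS[OF that] by (intro suminf_nonneg) auto
      ultimately show ?thesis by (simp add: eq)
    qed
    then show "\<exists>no. \<forall>n\<ge>no. norm (normTh a e t k s (seq_diff (X n) L) - 0) < r" by blast
  qed
  ultimately show ?thesis by blast
qed

lemma Nm_nonneg: "c \<in> ThetaS a e t k s \<Longrightarrow> 0 \<le> Nm s c"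
  using suminf_nonneg[OF Th_summ] by simp

lemma Th_cb: "cb_space (ThetaS a e t k s) (normTh a e t k s)"
proof -
  let ?T = "ThetaS a e t k s" and ?n = "normTh a e t k s"
  have b1: "\<forall>c\<in>?T. 0 \<le> ?n c" using Nm_nonneg by (simp add: normTh_eq)
  have b2: "\<forall>c\<in>?T. ?n c = 0 \<longleftrightarrow> c = seq_zero"
    using Nm_eq0 Nm_zero Th_zero by (auto simp: normTh_eq)
  have b3: "\<forall>c\<in>?T. \<forall>r. ?n (seq_scale r c) = \<bar>r\<bar> * ?n c"
    by (simp add: normTh_eq Th_scale Nm_scale)
  have b4: "\<forall>c\<in>?T. \<forall>d\<in>?T. ?n (seq_add c d) \<le> ?n c + ?n d"
    by (simp add: normTh_eq Th_add Nm_add)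
  have b5: "\<forall>X. (\<forall>n. X n \<in> ?T) \<and>
          (\<forall>\<epsilon>>0. \<exists>N. \<forall>m\<ge>N. \<forall>n\<ge>N. ?n (seq_diff (X m) (X n)) < \<epsilon>) \<longrightarrow>
          (\<exists>L\<in>?T. (\<lambda>n. ?n (seq_diff (X n) L)) \<longlonglongrightarrow> 0)"
  proof (intro allI impI)
    fix X :: "nat \<Rightarrow> nat \<Rightarrow> real"
    assume H: "(\<forall>n. X n \<in> ?T) \<and> (\<forall>\<epsilon>>0. \<exists>N. \<forall>m\<ge>N. \<forall>n\<ge>N. ?n (seq_diff (X m) (X n)) < \<epsilon>)"
    show "\<exists>L\<in>?T. (\<lambda>n. ?n (seq_diff (X n) L)) \<longlonglongrightarrow> 0"
      by (rule Th_complete) (use H in auto)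
  qed
  have banach: "banach_seq_space ?T ?n"
    unfolding banach_seq_space_def
    using Th_zero Th_add Th_scale b1 b2 b3 b4 b5 by (intro conjI) blast+
  have c1: "\<forall>i. \<exists>C. \<forall>c\<in>?T. \<bar>c i\<bar> \<le> C * ?n c"
    using coord_bound by (auto simp: normTh_eq)
  have c2: "\<forall>c\<in>?T. \<exists>!\<alpha>. (\<lambda>n. ?n (seq_diff c (seq_partial \<alpha> n))) \<longlonglongrightarrow> 0"
  proof
    fix c assume c: "c \<in> ?T"
    have mem: "seq_diff c (seq_partial \<alpha> n) \<in> ?T" for \<alpha> n by (intro Th_diff c Th_partial)
    show "\<exists>!\<alpha>. (\<lambda>n. ?n (seq_diff c (seq_partial \<alpha> n))) \<longlonglongrightarrow> 0"
    proof (rule ex1I[of _ c])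
      show "(\<lambda>n. ?n (seq_diff c (seq_partial c n))) \<longlonglongrightarrow> 0"
        using tail_Nm[OF c] by (simp add: normTh_eq[OF mem])
    next
      fix \<alpha> assume lim: "(\<lambda>n. ?n (seq_diff c (seq_partial \<alpha> n))) \<longlonglongrightarrow> 0"
      show "\<alpha> = c"
      proof
        fix i
        have l2: "(\<lambda>n. \<bar>t i\<bar> * ?n (seq_diff c (seq_partial \<alpha> n))) \<longlonglongrightarrow> \<bar>t i\<bar> * 0"
          by (intro tendsto_intros lim)
        have "\<forall>n\<ge>Suc i. \<bar>c i - \<alpha> i\<bar> \<le> \<bar>t i\<bar> * ?n (seq_diff c (seq_partial \<alpha> n))"
        proof (intro allI impI)
          fix n assume "n \<ge> Suc i"
          then have "seq_diff c (seq_partial \<alpha> n) i = c i - \<alpha> i"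
            by (simp add: seq_diff_def seq_partial_def)
          then show "\<bar>c i - \<alpha> i\<bar> \<le> \<bar>t i\<bar> * ?n (seq_diff c (seq_partial \<alpha> n))"
            using coord_bound[OF mem, of \<alpha> n i] by (simp add: normTh_eq[OF mem])
        qed
        then have "\<bar>c i - \<alpha> i\<bar> \<le> \<bar>t i\<bar> * 0" using LIMSEQ_le_const[OF l2] by blast
        then show "\<alpha> i = c i" by simp
      qed
    qed
  qed
  show ?thesis unfolding cb_space_def using banach c1 Th_unit c2 by blast
qed


lemma XF_iff: "f \<in> XF a e \<longleftrightarrow> (\<forall>s. f \<in> XS a e s)" by (simp add: XF_def)
lemma ThF_iff: "c \<in> ThetaF a e t k \<longleftrightarrow> (\<forall>s. c \<in> ThetaS a e t k s)" by (simp add: ThetaF_def)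

lemma g_sq: "(W s j * mx (\<lambda>i. gfun t e k i f) j)\<^sup>2 = (W s j * cf f j)\<^sup>2"
  by (simp add: mx_g power_mult_distrib)

lemma g_Th: "f \<in> XS a e s \<Longrightarrow> (\<lambda>i. gfun t e k i f) \<in> ThetaS a e t k s"
  by (simp add: ThetaS_iff g_sq XS_eq)

lemma g_norm: "f \<in> XS a e s \<Longrightarrow> normTh a e t k s (\<lambda>i. gfun t e k i f) = normS a e s f"
  by (simp add: normTh_eq g_Th g_sq normS_eq)

lemma g_dual: "F_dual (XF a e) (normS a e) (gfun t e k i)"
proof -
  have n0: "normS a e 0 f = norm f" for f by (simp add: normS_def innerS_def norm_eq_sqrt_inner)
  have "\<forall>f\<in>XF a e. \<bar>gfun t e k i f\<bar> \<le> \<bar>t i\<bar> * normS a e 0 f"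
    using cf_bound by (auto simp: gfun_eq abs_mult n0 intro: mult_left_mono)
  then show ?thesis unfolding F_dual_def
    by (auto simp: gfun_eq cf_add cf_scale algebra_simps)
qed

lemma sq_abs_eq: "(w * \<bar>x\<bar>)\<^sup>2 = (w * x)\<^sup>2" for w x :: real
  by (simp add: power_mult_distrib)

definition V :: "(nat \<Rightarrow> real) \<Rightarrow> 'a" where "V c = RF (\<lambda>j. c (fb j) / t (fb j))"

lemma x_le: "\<bar>c (fb j) / t (fb j)\<bar> \<le> mx c j"
  using mx_ge[OF fb_in, of c j] by (simp add: abs_divide)

lemma V_summ: assumes "c \<in> ThetaS a e t k s"
  shows "summable (\<lambda>j. (W s j * (c (fb j) / t (fb j)))\<^sup>2)"
proof -
  have "(W s j * (c (fb j) / t (fb j)))\<^sup>2 \<le> (W s j * mx c j)\<^sup>2" for j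
  proof -
    have "(W s j * \<bar>c (fb j) / t (fb j)\<bar>)\<^sup>2 \<le> (W s j * mx c j)\<^sup>2"
      by (rule sqle) (use x_le mx_nonneg in auto)
    then show ?thesis by (simp only: sq_abs_eq)
  qed
  then show ?thesis
    by (intro summable_comparison_test'[OF Th_summ[OF assms], where N=0]) simp
qed

lemma V_summ0: assumes "c \<in> ThetaS a e t k s"
  shows "summable (\<lambda>j. (c (fb j) / t (fb j))\<^sup>2)"
  by (rule summable_comparison_test'[OF V_summ[OF assms], where N=0]) (simp only: real_norm_def abs_power2 sq_le_Wsq)

lemma cf_V: "c \<in> ThetaS a e t k s \<Longrightarrow> cf (V c) j = c (fb j) / t (fb j)"
  unfolding V_def by (rule cf_RF[OF V_summ0])

lemma V_norm: assumes "c \<in> ThetaS a e t k s"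
  shows "V c \<in> XS a e s" "normS a e s (V c) \<le> normTh a e t k s c"
proof -
  show "V c \<in> XS a e s" using V_summ[OF assms] by (simp add: XS_eq cf_V[OF assms])
  have "(W s j * (c (fb j) / t (fb j)))\<^sup>2 \<le> (W s j * mx c j)\<^sup>2" for j
  proof -
    have "(W s j * \<bar>c (fb j) / t (fb j)\<bar>)\<^sup>2 \<le> (W s j * mx c j)\<^sup>2"
      by (rule sqle) (use x_le mx_nonneg in auto)
    then show ?thesis by (simp only: sq_abs_eq)
  qed
  then show "normS a e s (V c) \<le> normTh a e t k s c"
    unfolding normS_eq normTh_eq[OF assms] cf_V[OF assms]
    by (intro real_sqrt_le_mono suminf_le V_summ assms Th_summ)
qed

lemma V_g: "V (\<lambda>i. gfun t e k i f) = f"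
proof -
  have "(\<lambda>j. gfun t e k (fb j) f / t (fb j)) = cf f"
    using t_nz by (auto simp: gfun_eq blk_fb)
  then show ?thesis by (simp add: V_def RF_cf)
qed

lemma frame: "tight_F_frame (XF a e) (normS a e) (ThetaF a e t k) (normTh a e t k) (gfun t e k)"
proof -
  have gF: "\<forall>f\<in>XF a e. (\<lambda>i. gfun t e k i f) \<in> ThetaF a e t k"
    by (auto simp: XF_iff ThF_iff intro: g_Th)
  have bnd: "\<forall>s. \<exists>A B. 0 < A \<and> A \<le> B \<and> A = B \<and>
        (\<forall>f\<in>XF a e. A * normS a e s f \<le> normTh a e t k s (\<lambda>i. gfun t e k i f) \<and>
                     normTh a e t k s (\<lambda>i. gfun t e k i f) \<le> B * normS a e s f)"
    by (intro allI exI[of _ 1]) (auto simp: XF_iff g_norm)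
  have pre: "pre_F_frame (XF a e) (normS a e) (ThetaF a e t k) (normTh a e t k) (gfun t e k)"
    unfolding pre_F_frame_def using g_dual gF bnd by blast
  have Vp: "\<exists>V :: (nat \<Rightarrow> real) \<Rightarrow> 'a.
        (\<forall>c\<in>ThetaF a e t k. V c \<in> XF a e) \<and>
        (\<forall>c\<in>ThetaF a e t k. \<forall>d\<in>ThetaF a e t k. V (seq_add c d) = V c + V d) \<and>
        (\<forall>c\<in>ThetaF a e t k. \<forall>r. V (seq_scale r c) = r *\<^sub>R V c) \<and>
        (\<forall>s. \<exists>K. \<forall>c\<in>ThetaF a e t k. normS a e s (V c) \<le> K * normTh a e t k s c) \<and>
        (\<forall>f\<in>XF a e. V (\<lambda>i. gfun t e k i f) = f)"
  proof (intro exI[of _ V] conjI)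
    show "\<forall>c\<in>ThetaF a e t k. V c \<in> XF a e" by (auto simp: ThF_iff XF_iff intro: V_norm)
    show "\<forall>c\<in>ThetaF a e t k. \<forall>d\<in>ThetaF a e t k. V (seq_add c d) = V c + V d"
    proof (intro ballI)
      fix c d assume c: "c \<in> ThetaF a e t k" and d: "d \<in> ThetaF a e t k"
      then have c0: "c \<in> ThetaS a e t k 0" and d0: "d \<in> ThetaS a e t k 0" by (auto simp: ThF_iff)
      show "V (seq_add c d) = V c + V d"
        using Th_add[OF c0 d0]
        by (intro cf_inj) (simp add: cf_add cf_V[OF c0] cf_V[OF d0] cf_V[OF Th_add[OF c0 d0]],
            simp add: seq_add_def add_divide_distrib)
    qed
    show "\<forall>c\<in>ThetaF a e t k. \<forall>r. V (seq_scale r c) = r *\<^sub>R V c"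
    proof (intro ballI allI)
      fix c r assume c: "c \<in> ThetaF a e t k"
      then have c0: "c \<in> ThetaS a e t k 0" by (auto simp: ThF_iff)
      show "V (seq_scale r c) = r *\<^sub>R V c"
        by (intro cf_inj) (simp add: cf_scale cf_V[OF c0] cf_V[OF Th_scale[OF c0]], simp add: seq_scale_def)
    qed
    show "\<forall>s. \<exists>K. \<forall>c\<in>ThetaF a e t k. normS a e s (V c) \<le> K * normTh a e t k s c"
      by (intro allI exI[of _ 1]) (auto simp: ThF_iff intro: V_norm)
    show "\<forall>f\<in>XF a e. V (\<lambda>i. gfun t e k i f) = f" by (simp add: V_g)
  qed
  have F: "F_frame (XF a e) (normS a e) (ThetaF a e t k) (normTh a e t k) (gfun t e k)"
    unfolding F_frame_def using pre Vp by blast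
  have T: "tight_pre_F_frame (XF a e) (normS a e) (ThetaF a e t k) (normTh a e t k) (gfun t e k)"
    unfolding tight_pre_F_frame_def using pre bnd by blast
  show ?thesis unfolding tight_F_frame_def using F T by blast
qed

lemma ThF_dense:
  assumes c: "c \<in> ThetaS a e t k s" and "\<epsilon> > 0"
  shows "\<exists>d\<in>ThetaF a e t k. normTh a e t k s (seq_diff c d) < \<epsilon>"
proof -
  have "eventually (\<lambda>n. Nm s (seq_diff c (seq_partial c n)) < \<epsilon>) sequentially"
    using tail_Nm[OF c] \<open>\<epsilon> > 0\<close> by (intro order_tendstoD) auto
  then obtain n where "Nm s (seq_diff c (seq_partial c n)) < \<epsilon>"
    by (auto simp: eventually_sequentially)
  moreover have "seq_partial c n \<in> ThetaF a e t k" by (simp add: ThF_iff Th_partial)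
  ultimately show ?thesis using normTh_eq[OF Th_diff[OF c Th_partial]] by metis
qed


lemma conj1: "\<forall>s. \<forall>f\<in>XS a e s. \<forall>h\<in>XS a e s. s \<ge> 1 \<longrightarrow>
            summable (\<lambda>i. (a i s)\<^sup>2 * inner f (e i) * inner (e i) h)"
proof (intro allI ballI impI)
  fix s f h assume f: "f \<in> XS a e s" and h: "h \<in> XS a e s" and s: "s \<ge> 1"
  have "summable (\<lambda>i. (W s i * cf f i) * (W s i * cf h i))"
    using f h by (intro sq_prod_summable) (auto simp: XS_eq)
  moreover have "(\<lambda>i. (W s i * cf f i) * (W s i * cf h i)) = (\<lambda>i. (a i s)\<^sup>2 * inner f (e i) * inner (e i) h)"
    using s by (auto simp: W_def cf_def power2_eq_square inner_commute[of "e _"] mult_ac)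
  ultimately show "summable (\<lambda>i. (a i s)\<^sup>2 * inner f (e i) * inner (e i) h)" by simp
qed

lemma XF_ne: "XF a e \<noteq> {0}"
proof -
  have "cf (e 0) i = (if i = 0 then 1 else 0)" for i by (simp add: cf_def orthonormal)
  then have "e 0 \<in> XF a e" unfolding XF_iff XS_eq
    by (auto intro!: summable_fin_supp[of 1])
  moreover have "e 0 \<noteq> 0" using orthonormal[of 0 0] by auto
  ultimately show ?thesis by blast
qed

lemma ThF_ne: "ThetaF a e t k \<noteq> {seq_zero}"
proof -
  have "unit_seq 0 \<in> ThetaF a e t k" by (simp add: ThF_iff Th_unit)
  moreover have "unit_seq 0 \<noteq> seq_zero" by (auto simp: unit_seq_def seq_zero_def fun_eq_iff)
  ultimately show ?thesis by blast
qed

lemma normTh_mono: "c \<in> ThetaS a e t k (Suc s) \<Longrightarrow> normTh a e t k s c \<le> normTh a e t k (Suc s) c"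
proof -
  assume c: "c \<in> ThetaS a e t k (Suc s)"
  then have c0: "c \<in> ThetaS a e t k s" using Th_mono by blast
  show ?thesis using Nm_mono[OF c] by (simp only: normTh_eq[OF c] normTh_eq[OF c0])
qed

end

theorem proposition5p3:
  fixes e :: "nat \<Rightarrow> 'a::{real_inner, complete_space}"
    and a :: "nat \<Rightarrow> nat \<Rightarrow> real"
    and k :: "nat \<Rightarrow> nat"
    and t :: "nat \<Rightarrow> real"
  assumes orthonormal: "\<And>i j. inner (e i) (e j) = (if i = j then 1 else 0)"
    and complete_basis: "closure (span (range e)) = UNIV"
    and a_ge1: "\<And>i s. s \<ge> 1 \<Longrightarrow> 1 \<le> a i s"
    and a_mono: "\<And>i s. s \<ge> 1 \<Longrightarrow> a i s \<le> a i (Suc s)"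
    and k_pos: "0 < k 0"
    and k_mono: "strict_mono k"
    and t_nz: "\<And>i. t i \<noteq> 0"
  shows
    \<comment> \<open>Hilbert spaces X_s\<close>
    "(\<forall>s. \<forall>f\<in>XS a e s. \<forall>h\<in>XS a e s. s \<ge> 1 \<longrightarrow>
            summable (\<lambda>i. (a i s)\<^sup>2 * inner f (e i) * inner (e i) h)) \<and>
     (\<forall>s. hilbert_on (XS a e s) (innerS a e s)) \<and>
     XF a e \<noteq> {0} \<and>
     (\<forall>s. XS a e (Suc s) \<subseteq> XS a e s) \<and>
     (\<forall>s. \<forall>f\<in>XS a e (Suc s). normS a e s f \<le> normS a e (Suc s) f) \<and>
     (\<forall>s. \<forall>f\<in>XS a e s. \<forall>\<epsilon>>0. \<exists>h\<in>XF a e. normS a e s (f - h) < \<epsilon>) \<and>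
     \<comment> \<open>CB-spaces Theta_s\<close>
     (\<forall>s. cb_space (ThetaS a e t k s) (normTh a e t k s)) \<and>
     ThetaF a e t k \<noteq> {seq_zero} \<and>
     (\<forall>s. ThetaS a e t k (Suc s) \<subseteq> ThetaS a e t k s) \<and>
     (\<forall>s. \<forall>c\<in>ThetaS a e t k (Suc s). normTh a e t k s c \<le> normTh a e t k (Suc s) c) \<and>
     (\<forall>s. \<forall>c\<in>ThetaS a e t k s. \<forall>\<epsilon>>0. \<exists>d\<in>ThetaF a e t k.
            normTh a e t k s (seq_diff c d) < \<epsilon>) \<and>
     \<comment> \<open>tight F-frame\<close>
     tight_F_frame (XF a e) (normS a e) (ThetaF a e t k) (normTh a e t k) (gfun t e k)"
  proof -
  interpret st e a k t
    by unfold_locales (use orthonormal complete_basis a_ge1 a_mono k_pos k_mono t_nz in auto)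
  show ?thesis
    using conj1 XS_hilbert XF_ne XS_mono normS_mono XF_dense Th_cb ThF_ne Th_mono normTh_mono
      ThF_dense frame
    by (intro conjI) blast+
qed

end
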